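(* Let $k\ge 1$ and $d\ge 1$. For each $x \in \mathbb{R}^d$ let $a_x$ be a convolution product of $k$ bump functions on $\mathbb{R}^d$, and assume that $(x,y)\mapsto a_x(y)$ is measurable and belongs to $L^\infty(\mathrm{d}x; L^1(\mathrm{d}y))$. Define, for $f\in L^2(\mathbb{R}^d)\cap L^1(\mathbb{R}^d)$, $$Tf(\xi)=\int_{\mathbb{R}^d} \widehat{a}_x(\xi)\, e^{2\pi i x \cdot \xi}\, f(x)\, \mathrm{d} x .$$ Then there is a constant $C$ depending only on $k$ and $d$ such that $\|Tf\|_{L^2(\mathbb{R}^d)}\le C \|f\|_{L^2(\mathbb{R}^d)}$ for all such $f$.
   Context: A measurable function $a$ on $\mathbb{R}^d$ is called a bump function if there exists an axis-parallel rectangle $R$ centered at the origin with $|a|\le |R|^{-1}1_R$ pointwise. $\widehat{a}_x$ denotes the Fourier transform of $a_x$. *)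

theory Defs
  imports "HOL-Analysis.Analysis"
begin

definition bump :: "('a::euclidean_space \<Rightarrow> complex) \<Rightarrow> bool" where
  "bump b \<longleftrightarrow> b \<in> borel_measurable lebesgue \<and>
     (\<exists>v::'a. (\<forall>i\<in>Basis. 0 < v \<bullet> i) \<and>
        (\<forall>y. norm (b y) \<le> indicator (cbox (-v) v) y / measure lebesgue (cbox (-v) v)))"

definition conv :: "('a::euclidean_space \<Rightarrow> complex) \<Rightarrow> ('a \<Rightarrow> complex) \<Rightarrow> 'a \<Rightarrow> complex" where
  "conv f g = (\<lambda>y. LINT z|lebesgue. f (y - z) * g z)"

fun conv_prod :: "('a::euclidean_space \<Rightarrow> complex) list \<Rightarrow> 'a \<Rightarrow> complex" where
  "conv_prod [] = (\<lambda>_. 0)"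
| "conv_prod [b] = b"
| "conv_prod (b # c # bs) = conv b (conv_prod (c # bs))"

definition fourier :: "('a::euclidean_space \<Rightarrow> complex) \<Rightarrow> 'a \<Rightarrow> complex" where
  "fourier f = (\<lambda>\<xi>. LINT y|lebesgue. f y * cis (- 2 * pi * (y \<bullet> \<xi>)))"

definition opT :: "('a::euclidean_space \<Rightarrow> 'a \<Rightarrow> complex) \<Rightarrow> ('a \<Rightarrow> complex) \<Rightarrow> 'a \<Rightarrow> complex" where
  "opT a f = (\<lambda>\<xi>. LINT x|lebesgue. fourier (a x) \<xi> * cis (2 * pi * (x \<bullet> \<xi>)) * f x)"

end

theory Submission
  imports Defs "HOL-Probability.Probability"
begin

definition avg1 :: "(real \<Rightarrow> ennreal) \<Rightarrow> int \<Rightarrow> real \<Rightarrow> ennreal" where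
  "avg1 h n t = ennreal (1 / 2 powr (n+1)) * (\<integral>\<^sup>+ s. indicator {-(2 powr n)..2 powr n} s * h (t - s) \<partial>lborel)"

definition M1 :: "(real \<Rightarrow> ennreal) \<Rightarrow> real \<Rightarrow> ennreal" where
  "M1 h t = (SUP n. avg1 h n t)"

lemma avg1_measurable[measurable]:
  assumes [measurable]: "h \<in> borel_measurable borel"
  shows "avg1 h n \<in> borel_measurable borel"
  unfolding avg1_def by measurable

lemma M1_measurable[measurable]:
  assumes [measurable]: "h \<in> borel_measurable borel"
  shows "M1 h \<in> borel_measurable borel"
  unfolding M1_def by measurable

lemma avg1_cball:
  assumes [measurable]: "h \<in> borel_measurable borel"
  shows "(\<integral>\<^sup>+ s. indicator {-r..r} s * h (t - s) \<partial>lborel) = (\<integral>\<^sup>+ u. indicator (cball t r) u * h u \<partial>lborel)"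
proof -
  have [measurable]: "cball t r \<in> sets borel" by (simp add: borel_closed)
  have "(\<integral>\<^sup>+ u. indicator (cball t r) u * h u \<partial>lborel) = ennreal \<bar>-1\<bar> * (\<integral>\<^sup>+ x. indicator (cball t r) (t + -1 * x) * h (t + -1 * x) \<partial>lborel)"
    by (rule nn_integral_real_affine) (auto, measurable)
  also have "\<dots> = (\<integral>\<^sup>+ s. indicator {-r..r} s * h (t - s) \<partial>lborel)"
    by (auto intro!: nn_integral_cong simp: indicator_def dist_real_def abs_le_iff)
  finally show ?thesis ..
qed

lemma emeasure_UN_countable_le:
  assumes sets: "\<And>i. i \<in> I \<Longrightarrow> X i \<in> sets M" and I: "countable I"
  shows "emeasure M (\<Union>(X ` I)) \<le> (\<integral>\<^sup>+i. emeasure M (X i) \<partial>count_space I)"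
proof -
  have le: "indicator (\<Union>(X ` I)) x \<le> (\<integral>\<^sup>+ i. indicator (X i) x \<partial>count_space I)" for x
  proof cases
    assume "x \<in> \<Union>(X ` I)" then obtain j where j: "j \<in> I" "x \<in> X j" by auto
    have "(1::ennreal) = (\<integral>\<^sup>+ i. indicator {j} i \<partial>count_space I)"
      using j by (subst nn_integral_indicator) auto
    also have "\<dots> \<le> (\<integral>\<^sup>+ i. indicator (X i) x \<partial>count_space I)"
      by (rule nn_integral_mono) (auto simp: indicator_def j)
    finally show ?thesis using j by (auto simp: indicator_def)
  qed simp
  have U: "\<Union>(X ` I) \<in> sets M" using sets I by (intro sets.countable_UN') auto
  have "emeasure M (\<Union>(X ` I)) = (\<integral>\<^sup>+x. indicator (\<Union>(X ` I)) x \<partial>M)" using U by simp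
  also have "\<dots> \<le> (\<integral>\<^sup>+x. \<integral>\<^sup>+ i. indicator (X i) x \<partial>count_space I \<partial>M)"
    by (rule nn_integral_mono) (rule le)
  also have "\<dots> = (\<integral>\<^sup>+ i. \<integral>\<^sup>+ x. indicator (X i) x \<partial>M \<partial>count_space I)"
    by (rule nn_integral_count_space_nn_integral) (use assms in auto)
  also have "\<dots> = (\<integral>\<^sup>+i. emeasure M (X i) \<partial>count_space I)"
    by (intro nn_integral_cong) (auto simp: sets)
  finally show ?thesis .
qed

lemma weak11:
  assumes h[measurable]: "h \<in> borel_measurable borel" and lam: "0 < l"
  shows "emeasure lborel {t. ennreal l < M1 h t} \<le> ennreal (5/l) * (\<integral>\<^sup>+ u. h u \<partial>lborel)"
proof (cases "(\<integral>\<^sup>+ u. h u \<partial>lborel) = \<infinity>")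
  case True
  then show ?thesis using lam by (simp add: ennreal_mult_top)
next
  case False
  define I where "I = enn2real (\<integral>\<^sup>+ u. h u \<partial>lborel)"
  have I: "(\<integral>\<^sup>+ u. h u \<partial>lborel) = ennreal I" "0 \<le> I"
    using False by (auto simp: I_def less_top)
  define S where "S = {t. ennreal l < M1 h t}"
  define J where "J t r = (\<integral>\<^sup>+ u. indicator (cball t r) u * h u \<partial>lborel)" for t r
  have ex: "\<exists>n::int. ennreal (l * (2 * 2 powr n)) < J t (2 powr n)" if "t \<in> S" for t
  proof -
    from that obtain n where "ennreal l < avg1 h n t" unfolding S_def M1_def by (auto simp: less_SUP_iff)
    hence "ennreal l < ennreal (1 / 2 powr (real_of_int n + 1)) * J t (2 powr n)" unfolding avg1_def J_def avg1_cball[OF h] .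
    then have "ennreal (2 powr (real_of_int n + 1)) * ennreal l < ennreal (2 powr (real_of_int n + 1)) * (ennreal (1 / 2 powr (real_of_int n + 1)) * J t (2 powr n))"
      by (intro ennreal_mult_strict_left_mono) auto
    also have "\<dots> = J t (2 powr n)"
      by (simp add: ennreal_mult[symmetric] mult.assoc[symmetric])
    finally show ?thesis using lam by (intro exI[of _ n]) (auto simp: ennreal_mult[symmetric] powr_add mult.commute)
  qed
  define n where "n t = (SOME n::int. ennreal (l * (2 * 2 powr n)) < J t (2 powr n))" for t
  define r where "r t = 2 powr (n t)" for t
  have rJ: "ennreal (l * (2 * r t)) < J t (r t)" if "t \<in> S" for t
    using someI_ex[OF ex[OF that]] by (simp add: r_def n_def)
  have Jle: "J t \<rho> \<le> ennreal I" for t \<rho>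
    unfolding J_def I(1)[symmetric] by (rule nn_integral_mono) (auto simp: indicator_def)
  have rpos: "0 < r t" for t by (simp add: r_def)
  have rB: "r t \<le> I / (2*l)" if "t \<in> S" for t
  proof -
    have "ennreal (l * (2 * r t)) < ennreal I" using rJ[OF that] Jle[of t "r t"] by auto
    moreover have "0 \<le> l * (2 * r t)" using lam rpos[of t] by simp
    ultimately have "l * (2 * r t) < I" by (simp add: ennreal_less_iff)
    then show ?thesis using lam by (simp add: field_simps)
  qed
  obtain C where C: "countable C" "C \<subseteq> S" "pairwise (\<lambda>i j. disjnt (cball i (r i)) (cball j (r j))) C"
      "S \<subseteq> (\<Union>i\<in>C. cball i (5 * r i))"
    using Vitali_covering_lemma_cballs[where S=S and K=S and a="\<lambda>i. i" and r=r and B="I/(2*l)"]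
      rpos rB by (metis (no_types, lifting) UN_I centre_in_cball less_imp_le subsetI)
  have "emeasure lborel S \<le> emeasure lborel (\<Union>i\<in>C. cball i (5 * r i))"
    by (rule emeasure_mono) (use C in \<open>auto intro: sets.countable_UN' simp: borel_closed\<close>)
  also have "\<dots> \<le> (\<integral>\<^sup>+ i. emeasure lborel (cball i (5 * r i)) \<partial>count_space C)"
    by (rule emeasure_UN_countable_le) (use C in \<open>auto simp: borel_closed\<close>)
  also have "\<dots> \<le> (\<integral>\<^sup>+ i. ennreal (5/l) * J i (r i) \<partial>count_space C)"
  proof (rule nn_integral_mono)
    fix i assume "i \<in> space (count_space C)"
    then have iS: "i \<in> S" using C by auto
    have "emeasure lborel (cball i (5 * r i)) = ennreal (10 * r i)"
      using rpos[of i] by (simp add: cball_eq_atLeastAtMost)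
    also have "\<dots> = ennreal (5/l) * ennreal (l * (2 * r i))"
      using lam rpos[of i] by (simp add: ennreal_mult[symmetric])
    also have "\<dots> \<le> ennreal (5/l) * J i (r i)"
      using rJ[OF iS] by (intro mult_left_mono) auto
    finally show "emeasure lborel (cball i (5 * r i)) \<le> ennreal (5/l) * J i (r i)" .
  qed
  also have "\<dots> = ennreal (5/l) * (\<integral>\<^sup>+ i. J i (r i) \<partial>count_space C)"
    by (rule nn_integral_cmult) auto
  also have "(\<integral>\<^sup>+ i. J i (r i) \<partial>count_space C) = emeasure (density lborel h) (\<Union>i\<in>C. cball i (r i))"
  proof -
    have "emeasure (density lborel h) (\<Union>i\<in>C. cball i (r i)) = (\<integral>\<^sup>+i. emeasure (density lborel h) (cball i (r i)) \<partial>count_space C)"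
      by (rule emeasure_UN_countable) (use C in \<open>auto simp: borel_closed disjoint_family_on_def pairwise_def disjnt_def\<close>)
    also have "\<dots> = (\<integral>\<^sup>+ i. J i (r i) \<partial>count_space C)"
      by (intro nn_integral_cong) (auto simp: J_def emeasure_density borel_closed mult.commute)
    finally show ?thesis ..
  qed
  also have "emeasure (density lborel h) (\<Union>i\<in>C. cball i (r i)) \<le> emeasure (density lborel h) UNIV"
    by (rule emeasure_mono) auto
  also have "\<dots> = (\<integral>\<^sup>+ u. h u \<partial>lborel)"
    by (simp add: emeasure_density)
  finally show ?thesis by (simp add: S_def mult_left_mono)
qed

lemma layer_finite:
  assumes c: "0 \<le> c"
  shows "(\<integral>\<^sup>+x. ennreal (2 * x) * indicator {0..<c} x \<partial>lborel) = ennreal (c^2)"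
proof -
  have "(\<integral>\<^sup>+x. ennreal (2 * x) * indicator {0..<c} x \<partial>lborel) = (\<integral>\<^sup>+x. ennreal (2 * x) * indicator {0..c} x \<partial>lborel)"
    by (rule nn_integral_cong_AE) (use AE_lborel_singleton[of c] in \<open>eventually_elim, auto simp: indicator_def\<close>)
  also have "\<dots> = c^2 - 0^2"
    by (rule nn_integral_FTC_Icc) (use c in \<open>auto intro!: derivative_eq_intros\<close>)
  finally show ?thesis by simp
qed

lemma ennreal_unbounded_top:
  fixes X :: ennreal
  assumes "\<And>n::nat. ennreal (real n) \<le> X"
  shows "X = \<infinity>"
proof (rule ccontr)
  assume "X \<noteq> \<infinity>"
  then obtain r where r: "X = ennreal r" "0 \<le> r" by (cases X) auto
  obtain n :: nat where "r < real n" using reals_Archimedean2 by blast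
  with assms[of n] r show False by (simp add: ennreal_le_iff)
qed

lemma sq_le_layer:
  fixes y :: ennreal
  shows "y^2 \<le> (\<integral>\<^sup>+x. ennreal (2 * x) * indicator {x. ennreal x < y} x \<partial>lborel)"
proof (cases y)
  case (real c)
  then have "y^2 = (\<integral>\<^sup>+x. ennreal (2 * x) * indicator {0..<c} x \<partial>lborel)"
    by (simp add: layer_finite ennreal_power)
  also have "\<dots> \<le> (\<integral>\<^sup>+x. ennreal (2 * x) * indicator {x. ennreal x < y} x \<partial>lborel)"
    by (rule nn_integral_mono) (auto simp: indicator_def real ennreal_less_iff)
  finally show ?thesis .
next
  case top
  have "(\<integral>\<^sup>+x. ennreal (2 * x) * indicator {x. ennreal x < y} x \<partial>lborel) = \<infinity>"
  proof (rule ennreal_unbounded_top)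
    fix n :: nat
    have "ennreal (real n) \<le> ennreal ((real n)^2)"
      proof (rule ennreal_leI)
      show "real n \<le> (real n)^2"
      proof (cases "n = 0")
        case False
        then have "1 \<le> real n" by simp
        then show ?thesis using mult_left_mono[of 1 "real n" "real n"] by (simp add: power2_eq_square)
      qed simp
    qed
    also have "\<dots> = (\<integral>\<^sup>+x. ennreal (2 * x) * indicator {0..<real n} x \<partial>lborel)"
      by (simp add: layer_finite)
    also have "\<dots> \<le> (\<integral>\<^sup>+x. ennreal (2 * x) * indicator {x. ennreal x < y} x \<partial>lborel)"
      by (rule nn_integral_mono) (auto simp: indicator_def top)
    finally show "ennreal (real n) \<le> \<dots>" .
  qed
  then show ?thesis by simp
qed

lemma avg1_const:
  "(\<integral>\<^sup>+ s. indicator {-(2 powr n)..2 powr n} s \<partial>lborel) = ennreal (2 powr (real_of_int n + 1))"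
  by (simp add: powr_add)

lemma avg1_split:
  assumes [measurable]: "h \<in> borel_measurable borel" and c: "0 \<le> c"
  shows "avg1 h n t \<le> avg1 (\<lambda>u. h u * indicator {u. ennreal c < h u} u) n t + ennreal c"
proof -
  let ?g = "\<lambda>u. h u * indicator {u. ennreal c < h u} u"
  let ?I = "\<lambda>s. indicator {-(2 powr n)..2 powr n} s :: ennreal"
  have "(\<integral>\<^sup>+ s. ?I s * h (t - s) \<partial>lborel) \<le> (\<integral>\<^sup>+ s. ?I s * ?g (t - s) + ennreal c * ?I s \<partial>lborel)"
    by (rule nn_integral_mono) (auto simp: indicator_def not_less)
  also have "\<dots> = (\<integral>\<^sup>+ s. ?I s * ?g (t - s) \<partial>lborel) + ennreal c * ennreal (2 powr (real_of_int n + 1))"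
    by (subst nn_integral_add) (auto simp: nn_integral_cmult avg1_const)
  finally have *: "(\<integral>\<^sup>+ s. ?I s * h (t - s) \<partial>lborel) \<le> \<dots>" .
  have "avg1 h n t \<le> ennreal (1 / 2 powr (real_of_int n + 1)) * ((\<integral>\<^sup>+ s. ?I s * ?g (t - s) \<partial>lborel) + ennreal c * ennreal (2 powr (real_of_int n + 1)))"
    unfolding avg1_def by (rule mult_left_mono[OF *]) auto
  also have "\<dots> = avg1 ?g n t + ennreal c"
    unfolding avg1_def distrib_left
    by (simp add: ennreal_mult[symmetric] mult.assoc mult.left_commute[of "ennreal (1 / _)"])
  finally show ?thesis .
qed

lemma M1_split:
  assumes [measurable]: "h \<in> borel_measurable borel" and c: "0 \<le> c"
  shows "M1 h t \<le> M1 (\<lambda>u. h u * indicator {u. ennreal c < h u} u) t + ennreal c"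
  unfolding M1_def
proof (rule SUP_least)
  fix n
  have "avg1 h n t \<le> avg1 (\<lambda>u. h u * indicator {u. ennreal c < h u} u) n t + ennreal c"
    by (rule avg1_split) (use c in auto)
  also have "\<dots> \<le> (SUP n. avg1 (\<lambda>u. h u * indicator {u. ennreal c < h u} u) n t) + ennreal c"
    by (intro add_right_mono SUP_upper) auto
  finally show "avg1 h n t \<le> \<dots>" .
qed

lemma layer_bound2:
  fixes y :: ennreal
  shows "(\<integral>\<^sup>+l. indicator {0<..} l * indicator {l. ennreal (l/2) < y} l \<partial>lborel) \<le> 2 * y"
proof (cases y)
  case (real c)
  have "(\<integral>\<^sup>+l. indicator {0<..} l * indicator {l. ennreal (l/2) < y} l \<partial>lborel) \<le> (\<integral>\<^sup>+l. indicator {0..2*c} l \<partial>lborel)"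
    by (rule nn_integral_mono) (auto simp: indicator_def real ennreal_less_iff)
  also have "\<dots> = 2 * y" using real by (simp add: ennreal_mult)
  finally show ?thesis .
qed simp

theorem M1_L2:
  assumes h[measurable]: "h \<in> borel_measurable borel"
  shows "(\<integral>\<^sup>+t. (M1 h t)^2 \<partial>lborel) \<le> 40 * (\<integral>\<^sup>+t. (h t)^2 \<partial>lborel)"
proof -
  define H where "H l u = h u * indicator {u. ennreal (l/2) < h u} u" for l u
  have [measurable]: "case_prod H \<in> borel_measurable (lborel \<Otimes>\<^sub>M lborel)"
    unfolding H_def by measurable
  have Hm[measurable]: "H l \<in> borel_measurable borel" for l
    unfolding H_def by measurable
  have "(\<integral>\<^sup>+t. (M1 h t)^2 \<partial>lborel) \<le> (\<integral>\<^sup>+t. \<integral>\<^sup>+l. ennreal (2 * l) * indicator {l. ennreal l < M1 h t} l \<partial>lborel \<partial>lborel)"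
    by (rule nn_integral_mono) (rule sq_le_layer)
  also have "\<dots> = (\<integral>\<^sup>+l. \<integral>\<^sup>+t. ennreal (2 * l) * indicator {l. ennreal l < M1 h t} l \<partial>lborel \<partial>lborel)"
    by (rule lborel_pair.Fubini'[symmetric]) measurable
  also have "\<dots> = (\<integral>\<^sup>+l. ennreal (2 * l) * emeasure lborel {t. ennreal l < M1 h t} \<partial>lborel)"
  proof (rule nn_integral_cong)
    fix l :: real
    have "(\<integral>\<^sup>+t. ennreal (2 * l) * indicator {l. ennreal l < M1 h t} l \<partial>lborel) = (\<integral>\<^sup>+t. ennreal (2 * l) * indicator {t. ennreal l < M1 h t} t \<partial>lborel)"
      by (rule nn_integral_cong) (auto simp: indicator_def)
    also have "\<dots> = ennreal (2 * l) * emeasure lborel {t. ennreal l < M1 h t}"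
      by (subst nn_integral_cmult) auto
    finally show "(\<integral>\<^sup>+t. ennreal (2 * l) * indicator {l. ennreal l < M1 h t} l \<partial>lborel) = \<dots>" .
  qed
  also have "\<dots> \<le> (\<integral>\<^sup>+l. 20 * (indicator {0<..} l * (\<integral>\<^sup>+u. H l u \<partial>lborel)) \<partial>lborel)"
  proof (rule nn_integral_mono)
    fix l :: real
    show "ennreal (2 * l) * emeasure lborel {t. ennreal l < M1 h t} \<le> 20 * (indicator {0<..} l * (\<integral>\<^sup>+u. H l u \<partial>lborel))"
    proof (cases "0 < l")
      case True
      have sub: "{t. ennreal l < M1 h t} \<subseteq> {t. ennreal (l/2) < M1 (H l) t}"
      proof
        fix t assume "t \<in> {t. ennreal l < M1 h t}"
        then have "ennreal l < M1 (H l) t + ennreal (l/2)"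
          using M1_split[OF h, of "l/2" t] True unfolding H_def by auto
        also have "ennreal l = ennreal (l/2) + ennreal (l/2)"
          using True by (simp add: ennreal_plus[symmetric])
        finally show "t \<in> {t. ennreal (l/2) < M1 (H l) t}"
          by (simp add: add.commute ennreal_add_left_cancel_less)
      qed
      have "emeasure lborel {t. ennreal l < M1 h t} \<le> emeasure lborel {t. ennreal (l/2) < M1 (H l) t}"
        by (rule emeasure_mono[OF sub]) measurable
      also have "\<dots> \<le> ennreal (5/(l/2)) * (\<integral>\<^sup>+u. H l u \<partial>lborel)"
        by (rule weak11) (use True in auto)
      finally have "ennreal (2 * l) * emeasure lborel {t. ennreal l < M1 h t} \<le> ennreal (2 * l) * (ennreal (5/(l/2)) * (\<integral>\<^sup>+u. H l u \<partial>lborel))"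
        by (rule mult_left_mono) auto
      also have "\<dots> = 20 * (indicator {0<..} l * (\<integral>\<^sup>+u. H l u \<partial>lborel))"
        using True by (simp add: mult.assoc[symmetric] ennreal_mult[symmetric])
      finally show ?thesis .
    qed (simp add: ennreal_neg)
  qed
  also have "\<dots> = 20 * (\<integral>\<^sup>+l. \<integral>\<^sup>+u. indicator {0<..} l * H l u \<partial>lborel \<partial>lborel)"
    by (subst nn_integral_cmult) (auto simp: nn_integral_cmult)
  also have "(\<integral>\<^sup>+l. \<integral>\<^sup>+u. indicator {0<..} l * H l u \<partial>lborel \<partial>lborel) = (\<integral>\<^sup>+u. \<integral>\<^sup>+l. indicator {0<..} l * H l u \<partial>lborel \<partial>lborel)"
    by (rule lborel_pair.Fubini') measurable
  also have "\<dots> \<le> (\<integral>\<^sup>+u. 2 * (h u)^2 \<partial>lborel)"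
  proof (rule nn_integral_mono)
    fix u
    have "(\<integral>\<^sup>+l. indicator {0<..} l * H l u \<partial>lborel) = (\<integral>\<^sup>+l. h u * (indicator {0<..} l * indicator {l. ennreal (l/2) < h u} l) \<partial>lborel)"
      by (rule nn_integral_cong) (auto simp: H_def indicator_def)
    also have "\<dots> = h u * (\<integral>\<^sup>+l. indicator {0<..} l * indicator {l. ennreal (l/2) < h u} l \<partial>lborel)"
      by (rule nn_integral_cmult) measurable
    also have "\<dots> \<le> h u * (2 * h u)"
      by (rule mult_left_mono[OF layer_bound2]) auto
    finally show "(\<integral>\<^sup>+l. indicator {0<..} l * H l u \<partial>lborel) \<le> 2 * (h u)^2"
      by (simp add: power2_eq_square mult_ac)
  qed
  finally show ?thesis
    by (simp add: nn_integral_cmult mult.assoc[symmetric] mult_left_mono)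
qed

definition Mdir :: "'a::euclidean_space \<Rightarrow> ('a \<Rightarrow> ennreal) \<Rightarrow> 'a \<Rightarrow> ennreal" where
  "Mdir b H x = 2 * M1 (\<lambda>s. H (x + s *\<^sub>R b)) 0"

lemma Mdir_measurable[measurable]:
  assumes [measurable]: "H \<in> borel_measurable borel"
  shows "Mdir b H \<in> borel_measurable borel"
  unfolding Mdir_def M1_def avg1_def by measurable

lemma Mdir_shift:
  "Mdir b H (z + t *\<^sub>R b) = 2 * M1 (\<lambda>s. H (z + s *\<^sub>R b)) t"
  unfolding Mdir_def M1_def avg1_def
  by (intro arg_cong2[where f="(*)"] refl SUP_cong arg_cong2[where f="(*)"] nn_integral_cong)
     (simp add: algebra_simps)

lemma slice:
  fixes F :: "'a::euclidean_space \<Rightarrow> ennreal"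
  assumes [measurable]: "F \<in> borel_measurable borel" and i: "i \<in> Basis"
  shows "(\<integral>\<^sup>+x. F x \<partial>lborel) =
    (\<integral>\<^sup>+f. \<integral>\<^sup>+t. F ((\<Sum>b\<in>Basis-{i}. f b *\<^sub>R b) + t *\<^sub>R i) \<partial>lborel \<partial>(\<Pi>\<^sub>M b\<in>Basis-{i}. lborel))"
proof -
  interpret product_sigma_finite "\<lambda>_::'a. lborel :: real measure" by standard
  have B: "Basis = insert i (Basis - {i})" using i by auto
  have "(\<integral>\<^sup>+x. F x \<partial>lborel) = (\<integral>\<^sup>+f. F (\<Sum>b\<in>Basis. f b *\<^sub>R b) \<partial>(\<Pi>\<^sub>M b\<in>Basis. lborel))"
    by (subst lborel_eq[where 'a='a]) (simp add: nn_integral_distr)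
  also have "\<dots> = (\<integral>\<^sup>+f. F (\<Sum>b\<in>Basis. f b *\<^sub>R b) \<partial>(\<Pi>\<^sub>M b\<in>insert i (Basis-{i}). lborel))"
    using B by simp
  also have "\<dots> = (\<integral>\<^sup>+f. \<integral>\<^sup>+t. F (\<Sum>b\<in>Basis. (f(i:=t)) b *\<^sub>R b) \<partial>lborel \<partial>(\<Pi>\<^sub>M b\<in>Basis-{i}. lborel))"
    by (subst product_nn_integral_insert) (auto simp: B[symmetric])
  also have "\<dots> = (\<integral>\<^sup>+f. \<integral>\<^sup>+t. F ((\<Sum>b\<in>Basis-{i}. f b *\<^sub>R b) + t *\<^sub>R i) \<partial>lborel \<partial>(\<Pi>\<^sub>M b\<in>Basis-{i}. lborel))"
  proof (intro nn_integral_cong arg_cong[where f=F])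
    fix f t
    have "(\<Sum>b\<in>Basis. (f(i:=t)) b *\<^sub>R b) = (f(i:=t)) i *\<^sub>R i + (\<Sum>b\<in>Basis-{i}. (f(i:=t)) b *\<^sub>R b)"
      using i by (subst sum.remove[of _ i]) auto
    also have "(\<Sum>b\<in>Basis-{i}. (f(i:=t)) b *\<^sub>R b) = (\<Sum>b\<in>Basis-{i}. f b *\<^sub>R b)"
      by (intro sum.cong) auto
    finally show "(\<Sum>b\<in>Basis. (f(i:=t)) b *\<^sub>R b) = (\<Sum>b\<in>Basis-{i}. f b *\<^sub>R b) + t *\<^sub>R i"
      by simp
  qed
  finally show ?thesis .
qed

theorem Mdir_L2:
  assumes [measurable]: "H \<in> borel_measurable borel" and b: "b \<in> Basis"
  shows "(\<integral>\<^sup>+x. (Mdir b H x)^2 \<partial>lborel) \<le> 160 * (\<integral>\<^sup>+x. (H x)^2 \<partial>lborel)"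
proof -
  have "(\<integral>\<^sup>+x. (Mdir b H x)^2 \<partial>lborel) =
    (\<integral>\<^sup>+f. \<integral>\<^sup>+t. (Mdir b H ((\<Sum>c\<in>Basis-{b}. f c *\<^sub>R c) + t *\<^sub>R b))^2 \<partial>lborel \<partial>(\<Pi>\<^sub>M c\<in>Basis-{b}. lborel))"
    by (rule slice) (use b in auto)
  also have "\<dots> = (\<integral>\<^sup>+f. 4 * \<integral>\<^sup>+t. (M1 (\<lambda>s. H ((\<Sum>c\<in>Basis-{b}. f c *\<^sub>R c) + s *\<^sub>R b)) t)^2 \<partial>lborel \<partial>(\<Pi>\<^sub>M c\<in>Basis-{b}. lborel))"
    unfolding Mdir_shift by (intro nn_integral_cong) (simp add: nn_integral_cmult power_mult_distrib)
  also have "\<dots> \<le> (\<integral>\<^sup>+f. 4 * (40 * \<integral>\<^sup>+t. (H ((\<Sum>c\<in>Basis-{b}. f c *\<^sub>R c) + t *\<^sub>R b))^2 \<partial>lborel) \<partial>(\<Pi>\<^sub>M c\<in>Basis-{b}. lborel))"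
    by (intro nn_integral_mono mult_left_mono M1_L2) auto
  also have "\<dots> = 160 * (\<integral>\<^sup>+f. \<integral>\<^sup>+t. (H ((\<Sum>c\<in>Basis-{b}. f c *\<^sub>R c) + t *\<^sub>R b))^2 \<partial>lborel \<partial>(\<Pi>\<^sub>M c\<in>Basis-{b}. lborel))"
    by (subst nn_integral_cmult[symmetric]) (auto simp: mult.assoc)
  also have "\<dots> = 160 * (\<integral>\<^sup>+x. (H x)^2 \<partial>lborel)"
    by (subst slice[where i=b]) (use b in auto)
  finally show ?thesis .
qed

fun Mlist :: "'a::euclidean_space list \<Rightarrow> ('a \<Rightarrow> ennreal) \<Rightarrow> 'a \<Rightarrow> ennreal" where
  "Mlist [] H = H"
| "Mlist (b # bs) H = Mdir b (Mlist bs H)"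

lemma Mlist_measurable[measurable]:
  assumes [measurable]: "H \<in> borel_measurable borel"
  shows "Mlist bs H \<in> borel_measurable borel"
  by (induction bs) auto

theorem Mlist_L2:
  assumes [measurable]: "H \<in> borel_measurable borel" and "set bs \<subseteq> Basis"
  shows "(\<integral>\<^sup>+x. (Mlist bs H x)^2 \<partial>lborel) \<le> 160 ^ length bs * (\<integral>\<^sup>+x. (H x)^2 \<partial>lborel)"
  using assms(2)
proof (induction bs)
  case (Cons b bs)
  have "(\<integral>\<^sup>+x. (Mlist (b # bs) H x)^2 \<partial>lborel) \<le> 160 * (\<integral>\<^sup>+x. (Mlist bs H x)^2 \<partial>lborel)"
    using Cons.prems by (simp add: Mdir_L2)
  also have "\<dots> \<le> 160 * (160 ^ length bs * (\<integral>\<^sup>+x. (H x)^2 \<partial>lborel))"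
    using Cons by (intro mult_left_mono) auto
  finally show ?case by (simp add: mult.assoc)
qed simp

lemma dir_avg_le:
  assumes [measurable]: "G \<in> borel_measurable borel" and r: "0 < r"
  shows "(\<integral>\<^sup>+t. ennreal (indicator {-r..r} t / (2*r)) * G (x - t *\<^sub>R b) \<partial>lborel) \<le> Mdir b G x"
proof -
  define n :: int where "n = \<lceil>log 2 r\<rceil>"
  have r1: "r \<le> 2 powr n"
  proof -
    have "r = 2 powr (log 2 r)" using r by simp
    also have "\<dots> \<le> 2 powr n" unfolding n_def by (intro powr_mono) auto
    finally show ?thesis .
  qed
  have r2: "2 powr n < 2 * r"
  proof -
    have "n < log 2 r + 1" unfolding n_def by linarith
    then have "2 powr n < 2 powr (log 2 r + 1)" by simp
    also have "\<dots> = 2 * r" using r by (simp add: powr_add)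
    finally show ?thesis .
  qed
  have "(\<integral>\<^sup>+t. ennreal (indicator {-r..r} t / (2*r)) * G (x - t *\<^sub>R b) \<partial>lborel)
      \<le> (\<integral>\<^sup>+t. ennreal (2 * (1 / 2 powr (real_of_int n + 1))) * (indicator {-(2 powr n)..2 powr n} t * G (x + (0 - t) *\<^sub>R b)) \<partial>lborel)"
  proof (rule nn_integral_mono)
    fix t
    have "indicator {-r..r} t / (2*r) \<le> 2 * (1 / 2 powr (real_of_int n + 1)) * (indicator {-(2 powr n)..2 powr n} t :: real)"
    proof (cases "t \<in> {-r..r}")
      case True
      then have "t \<in> {-(2 powr n)..2 powr n}" using r1 by auto
      moreover have "1 / (2*r) \<le> 2 * (1 / 2 powr (real_of_int n + 1))"
        using r2 r by (simp add: powr_add field_simps)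
      ultimately show ?thesis using True by simp
    qed simp
    then show "ennreal (indicator {-r..r} t / (2*r)) * G (x - t *\<^sub>R b)
      \<le> ennreal (2 * (1 / 2 powr (real_of_int n + 1))) * (indicator {-(2 powr n)..2 powr n} t * G (x + (0 - t) *\<^sub>R b))"
      by (auto simp: indicator_def ennreal_leI mult.assoc[symmetric] intro!: mult_right_mono)
  qed
  also have "\<dots> = 2 * avg1 (\<lambda>s. G (x + s *\<^sub>R b)) n 0"
  proof -
    have e: "ennreal (2 * (1 / 2 powr (real_of_int n + 1))) = 2 * ennreal (1 / 2 powr (real_of_int n + 1))"
      by (subst ennreal_mult) auto
    show ?thesis unfolding avg1_def e by (subst nn_integral_cmult) (auto simp: mult.assoc)
  qed
  also have "\<dots> \<le> Mdir b G x"
    unfolding Mdir_def M1_def by (intro mult_left_mono SUP_upper) auto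
  finally show ?thesis .
qed

lemma box_le_Mlist:
  fixes G :: "'a::euclidean_space \<Rightarrow> ennreal"
  assumes G[measurable]: "G \<in> borel_measurable borel"
  shows "distinct bs \<Longrightarrow> set bs \<subseteq> Basis \<Longrightarrow> (\<And>b. b \<in> set bs \<Longrightarrow> 0 < r b) \<Longrightarrow>
    (\<integral>\<^sup>+f. G (x - (\<Sum>b\<in>set bs. f b *\<^sub>R b)) * (\<Prod>b\<in>set bs. ennreal (indicator {-r b..r b} (f b) / (2 * r b)))
       \<partial>(\<Pi>\<^sub>M b\<in>set bs. lborel)) \<le> Mlist bs G x"
proof (induction bs arbitrary: x)
  case Nil
  show ?case by (simp add: PiM_empty nn_integral_count_space_finite)
next
  case (Cons b bs)
  interpret product_sigma_finite "\<lambda>_::'a. lborel :: real measure" by standard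
  define \<phi> where "\<phi> c t = ennreal (indicator {-r c..r c} t / (2 * r c))" for c t
  have [measurable]: "\<phi> c \<in> borel_measurable borel" for c unfolding \<phi>_def by measurable
  have bn: "b \<notin> set bs" using Cons.prems by auto
  have "(\<integral>\<^sup>+f. G (x - (\<Sum>c\<in>set (b#bs). f c *\<^sub>R c)) * (\<Prod>c\<in>set (b#bs). \<phi> c (f c)) \<partial>(\<Pi>\<^sub>M c\<in>set (b#bs). lborel))
     = (\<integral>\<^sup>+t. \<integral>\<^sup>+f. G (x - (\<Sum>c\<in>insert b (set bs). (f(b:=t)) c *\<^sub>R c)) * (\<Prod>c\<in>insert b (set bs). \<phi> c ((f(b:=t)) c))
          \<partial>(\<Pi>\<^sub>M c\<in>set bs. lborel) \<partial>lborel)"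
    unfolding list.set(2) by (rule product_nn_integral_insert_rev) (auto simp: bn)
  also have "\<dots> = (\<integral>\<^sup>+t. \<phi> b t * \<integral>\<^sup>+f. G ((x - t *\<^sub>R b) - (\<Sum>c\<in>set bs. f c *\<^sub>R c)) * (\<Prod>c\<in>set bs. \<phi> c (f c))
          \<partial>(\<Pi>\<^sub>M c\<in>set bs. lborel) \<partial>lborel)"
  proof (intro nn_integral_cong)
    fix t
    have "(\<integral>\<^sup>+f. G (x - (\<Sum>c\<in>insert b (set bs). (f(b:=t)) c *\<^sub>R c)) * (\<Prod>c\<in>insert b (set bs). \<phi> c ((f(b:=t)) c))
          \<partial>(\<Pi>\<^sub>M c\<in>set bs. lborel)) = (\<integral>\<^sup>+f. \<phi> b t * (G ((x - t *\<^sub>R b) - (\<Sum>c\<in>set bs. f c *\<^sub>R c)) * (\<Prod>c\<in>set bs. \<phi> c (f c)))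
          \<partial>(\<Pi>\<^sub>M c\<in>set bs. lborel))"
    proof (intro nn_integral_cong)
      fix f
      have s: "(\<Sum>c\<in>set bs. (if c = b then t else f c) *\<^sub>R c) = (\<Sum>c\<in>set bs. f c *\<^sub>R c)"
        using bn by (intro sum.cong) auto
      have p: "(\<Prod>c\<in>set bs. \<phi> c (if c = b then t else f c)) = (\<Prod>c\<in>set bs. \<phi> c (f c))"
        using bn by (intro prod.cong) auto
      show "G (x - (\<Sum>c\<in>insert b (set bs). (f(b:=t)) c *\<^sub>R c)) * (\<Prod>c\<in>insert b (set bs). \<phi> c ((f(b:=t)) c))
          = \<phi> b t * (G ((x - t *\<^sub>R b) - (\<Sum>c\<in>set bs. f c *\<^sub>R c)) * (\<Prod>c\<in>set bs. \<phi> c (f c)))"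
        using bn by (simp add: s p algebra_simps)
    qed
    also have "\<dots> = \<phi> b t * \<integral>\<^sup>+f. G ((x - t *\<^sub>R b) - (\<Sum>c\<in>set bs. f c *\<^sub>R c)) * (\<Prod>c\<in>set bs. \<phi> c (f c)) \<partial>(\<Pi>\<^sub>M c\<in>set bs. lborel)"
      by (rule nn_integral_cmult) measurable
    finally show "(\<integral>\<^sup>+f. G (x - (\<Sum>c\<in>insert b (set bs). (f(b:=t)) c *\<^sub>R c)) * (\<Prod>c\<in>insert b (set bs). \<phi> c ((f(b:=t)) c))
          \<partial>(\<Pi>\<^sub>M c\<in>set bs. lborel)) = \<dots>" .
  qed
  also have "\<dots> \<le> (\<integral>\<^sup>+t. \<phi> b t * Mlist bs G (x - t *\<^sub>R b) \<partial>lborel)"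
    using Cons.IH[unfolded \<phi>_def[symmetric]] Cons.prems by (intro nn_integral_mono mult_left_mono) auto
  also have "\<dots> \<le> Mdir b (Mlist bs G) x"
    unfolding \<phi>_def by (rule dir_avg_le) (use Cons.prems in auto)
  finally show ?case unfolding \<phi>_def by simp
qed

definition Nbox :: "'a::euclidean_space \<Rightarrow> 'a \<Rightarrow> real" where
  "Nbox v w = indicator (cbox (-v) v) w / measure lborel (cbox (-v) v)"

lemma Nbox_measurable[measurable]: "Nbox v \<in> borel_measurable borel"
  unfolding Nbox_def by measurable

lemma Nbox_nonneg: "0 \<le> Nbox v w"
  unfolding Nbox_def by auto

lemma Nbox_sum:
  assumes v: "\<And>b. b \<in> Basis \<Longrightarrow> 0 < v \<bullet> b"
  shows "ennreal (Nbox v (\<Sum>b\<in>Basis. f b *\<^sub>R b)) = (\<Prod>b\<in>Basis. ennreal (indicator {-(v\<bullet>b)..v\<bullet>b} (f b) / (2 * (v\<bullet>b))))"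
proof -
  let ?y = "\<Sum>b\<in>Basis. f b *\<^sub>R b"
  have yc: "?y \<bullet> c = f c" if "c \<in> Basis" for c
    using that by (simp add: inner_sum_left inner_Basis if_distrib cong: if_cong)
  have m: "measure lborel (cbox (-v) v) = (\<Prod>b\<in>Basis. 2 * (v\<bullet>b))"
  proof -
    have "\<forall>b\<in>Basis. (-v) \<bullet> b \<le> v \<bullet> b" using v by (auto simp: less_imp_le)
    then show ?thesis by (subst measure_lborel_cbox_eq) (auto simp: inner_diff_left inner_add_left intro!: prod.cong)
  qed
  have "Nbox v ?y = (\<Prod>b\<in>Basis. indicator {-(v\<bullet>b)..v\<bullet>b} (f b) / (2 * (v\<bullet>b)))"
  proof (cases "?y \<in> cbox (-v) v")
    case True
    then have "\<forall>b\<in>Basis. f b \<in> {-(v\<bullet>b)..v\<bullet>b}" by (auto simp: mem_box yc)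
    then show ?thesis using True unfolding Nbox_def m by (simp add: prod_dividef)
  next
    case False
    then obtain c where c: "c \<in> Basis" "f c \<notin> {-(v\<bullet>b)..v\<bullet>b}" if "b = c" for b
      by (auto simp: mem_box yc)
    then have "(\<Prod>b\<in>Basis. indicator {-(v\<bullet>b)..v\<bullet>b} (f b) / (2 * (v\<bullet>b))) = (0::real)"
      by (intro prod_zero bexI[of _ c]) auto
    then show ?thesis using False unfolding Nbox_def by simp
  qed
  then show ?thesis by (subst prod_ennreal) (auto intro!: divide_nonneg_pos v)
qed

definition basis_list :: "'a::euclidean_space list" where
  "basis_list = (SOME bs. distinct bs \<and> set bs = Basis)"

lemma basis_list: "distinct (basis_list :: 'a::euclidean_space list)" "set (basis_list :: 'a list) = Basis"
proof -
  have "\<exists>bs. distinct bs \<and> set bs = (Basis :: 'a set)"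
    using finite_distinct_list[OF finite_Basis] by metis
  from someI_ex[OF this] show "distinct (basis_list :: 'a::euclidean_space list)" "set (basis_list :: 'a list) = Basis"
    unfolding basis_list_def by auto
qed

definition MS :: "('a::euclidean_space \<Rightarrow> ennreal) \<Rightarrow> 'a \<Rightarrow> ennreal" where
  "MS = Mlist basis_list"

lemma MS_measurable[measurable]: "H \<in> borel_measurable borel \<Longrightarrow> MS H \<in> borel_measurable borel"
  unfolding MS_def by measurable

theorem MS_L2:
  assumes [measurable]: "H \<in> borel_measurable borel"
  shows "(\<integral>\<^sup>+x. (MS H x)^2 \<partial>lborel) \<le> 160 ^ DIM('a) * (\<integral>\<^sup>+x. (H x)^2 \<partial>(lborel :: 'a::euclidean_space measure))"
proof -
  have "length (basis_list :: 'a list) = DIM('a)"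
    by (metis basis_list(1) basis_list(2) distinct_card)
  then show ?thesis
    using Mlist_L2[of H "basis_list :: 'a list"] basis_list unfolding MS_def by auto
qed

theorem box_avg_le_MS:
  fixes G :: "'a::euclidean_space \<Rightarrow> ennreal"
  assumes G[measurable]: "G \<in> borel_measurable borel" and v: "\<And>b. b \<in> Basis \<Longrightarrow> 0 < v \<bullet> b"
  shows "(\<integral>\<^sup>+w. ennreal (Nbox v w) * G (x - w) \<partial>lborel) \<le> MS G x"
proof -
  have "(\<integral>\<^sup>+w. ennreal (Nbox v w) * G (x - w) \<partial>lborel)
      = (\<integral>\<^sup>+f. ennreal (Nbox v (\<Sum>b\<in>Basis. f b *\<^sub>R b)) * G (x - (\<Sum>b\<in>Basis. f b *\<^sub>R b)) \<partial>(\<Pi>\<^sub>M b\<in>Basis. lborel))"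
    by (subst lborel_eq[where 'a='a]) (simp add: nn_integral_distr)
  also have "\<dots> = (\<integral>\<^sup>+f. G (x - (\<Sum>b\<in>set basis_list. f b *\<^sub>R b)) * (\<Prod>b\<in>set basis_list. ennreal (indicator {-(v\<bullet>b)..v\<bullet>b} (f b) / (2 * (v\<bullet>b))))
       \<partial>(\<Pi>\<^sub>M b\<in>set basis_list. lborel))"
    unfolding basis_list(2) by (intro nn_integral_cong) (simp add: Nbox_sum v mult.commute)
  also have "\<dots> \<le> MS G x"
    unfolding MS_def by (rule box_le_Mlist) (use basis_list v in auto)
  finally show ?thesis .
qed

fun Dv :: "'a::euclidean_space list \<Rightarrow> 'a \<Rightarrow> ennreal" where
  "Dv [] = (\<lambda>_. 0)"
| "Dv [v] = (\<lambda>y. ennreal (Nbox v y))"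
| "Dv (v # w # ws) = (\<lambda>y. \<integral>\<^sup>+z. ennreal (Nbox v (y - z)) * Dv (w # ws) z \<partial>lborel)"

lemma Dv_measurable[measurable]: "Dv vs \<in> borel_measurable borel"
  by (induction vs rule: Dv.induct) auto

lemma MSpow_measurable[measurable]: "H \<in> borel_measurable borel \<Longrightarrow> (MS ^^ n) H \<in> borel_measurable borel"
  by (induction n) auto

lemma nn_integral_translate:
  fixes F :: "'a::euclidean_space \<Rightarrow> ennreal"
  assumes [measurable]: "F \<in> borel_measurable borel"
  shows "(\<integral>\<^sup>+y. F y \<partial>lborel) = (\<integral>\<^sup>+w. F (z + w) \<partial>lborel)"
proof -
  have "(\<integral>\<^sup>+y. F y \<partial>lborel) = (\<integral>\<^sup>+y. F y \<partial>distr lborel borel ((+) z))"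
    by (simp add: lborel_distr_plus)
  also have "\<dots> = (\<integral>\<^sup>+w. F (z + w) \<partial>lborel)"
    by (subst nn_integral_distr) auto
  finally show ?thesis .
qed

lemma Dv_bound:
  fixes vs :: "'a::euclidean_space list"
  assumes "vs \<noteq> []" "\<And>v b. v \<in> set vs \<Longrightarrow> b \<in> Basis \<Longrightarrow> 0 < v \<bullet> b"
    and "H \<in> borel_measurable borel"
  shows "(\<integral>\<^sup>+y. Dv vs y * H (x - y) \<partial>lborel) \<le> (MS ^^ length vs) H x"
  using assms
proof (induction vs arbitrary: x H rule: Dv.induct)
  case (2 v)
  then show ?case using box_avg_le_MS[of H v x] by simp
next
  case (3 v w ws)
  note [measurable] = "3.prems"(3)
  let ?D = "Dv (w # ws)"
  have "(\<integral>\<^sup>+y. Dv (v # w # ws) y * H (x - y) \<partial>lborel)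
      = (\<integral>\<^sup>+y. \<integral>\<^sup>+z. ennreal (Nbox v (y - z)) * ?D z * H (x - y) \<partial>lborel \<partial>lborel)"
    by (simp add: nn_integral_multc)
  also have "\<dots> = (\<integral>\<^sup>+z. \<integral>\<^sup>+y. ennreal (Nbox v (y - z)) * ?D z * H (x - y) \<partial>lborel \<partial>lborel)"
    by (rule lborel_pair.Fubini') measurable
  also have "\<dots> = (\<integral>\<^sup>+z. ?D z * \<integral>\<^sup>+u. ennreal (Nbox v u) * H ((x - z) - u) \<partial>lborel \<partial>lborel)"
  proof (rule nn_integral_cong)
    fix z
    have "(\<integral>\<^sup>+y. ennreal (Nbox v (y - z)) * ?D z * H (x - y) \<partial>lborel)
        = (\<integral>\<^sup>+u. ennreal (Nbox v ((z + u) - z)) * ?D z * H (x - (z + u)) \<partial>lborel)"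
      by (rule nn_integral_translate) measurable
    also have "\<dots> = ?D z * \<integral>\<^sup>+u. ennreal (Nbox v u) * H ((x - z) - u) \<partial>lborel"
      by (subst nn_integral_cmult[symmetric]) (auto intro!: nn_integral_cong simp: algebra_simps)
    finally show "(\<integral>\<^sup>+y. ennreal (Nbox v (y - z)) * ?D z * H (x - y) \<partial>lborel) = \<dots>" .
  qed
  also have "\<dots> \<le> (\<integral>\<^sup>+z. ?D z * MS H (x - z) \<partial>lborel)"
    using "3.prems" by (intro nn_integral_mono mult_left_mono box_avg_le_MS) auto
  also have "\<dots> \<le> (MS ^^ length (w # ws)) (MS H) x"
    by (rule "3.IH") (use "3.prems" in auto)
  also have "\<dots> = (MS ^^ length (v # w # ws)) H x"
    by (simp add: funpow_swap1)
  finally show ?case .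
qed simp

theorem MSpow_L2:
  assumes [measurable]: "H \<in> borel_measurable borel"
  shows "(\<integral>\<^sup>+x. ((MS ^^ n) H x)^2 \<partial>lborel) \<le> (160 ^ DIM('a)) ^ n * (\<integral>\<^sup>+x. (H x)^2 \<partial>(lborel :: 'a::euclidean_space measure))"
proof (induction n)
  case (Suc n)
  have "(\<integral>\<^sup>+x. ((MS ^^ Suc n) H x)^2 \<partial>lborel) \<le> 160 ^ DIM('a) * (\<integral>\<^sup>+x. ((MS ^^ n) H x)^2 \<partial>(lborel :: 'a measure))"
    by (simp add: MS_L2)
  also have "\<dots> \<le> 160 ^ DIM('a) * ((160 ^ DIM('a)) ^ n * (\<integral>\<^sup>+x. (H x)^2 \<partial>(lborel :: 'a measure)))"
    by (intro mult_left_mono Suc) auto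
  finally show ?case by (simp add: mult.assoc)
qed simp

lemma norm_integral_le_nn:
  fixes f :: "'a \<Rightarrow> 'b::{banach, second_countable_topology}"
  shows "ennreal (norm (integral\<^sup>L M f)) \<le> (\<integral>\<^sup>+x. norm (f x) \<partial>M)"
  by (cases "integrable M f") (auto simp: integral_norm_bound_ennreal not_integrable_integral_eq)

lemma conv_prod_bound:
  fixes bs :: "('a::euclidean_space \<Rightarrow> complex) list"
  shows "list_all2 (\<lambda>b v. \<forall>y. norm (b y) \<le> Nbox v y) bs vs \<Longrightarrow> ennreal (norm (conv_prod bs y)) \<le> Dv vs y"
proof (induction bs arbitrary: vs y rule: conv_prod.induct)
  case 1
  then show ?case by simp
next
  case (2 b)
  then obtain v where "vs = [v]" "\<forall>y. norm (b y) \<le> Nbox v y" by (cases vs) auto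
  then show ?case by (simp add: ennreal_leI)
next
  case (3 b c cs)
  then obtain v w ws where vs: "vs = v # w # ws" and bv: "\<forall>y. norm (b y) \<le> Nbox v y"
      and rest: "list_all2 (\<lambda>b v. \<forall>y. norm (b y) \<le> Nbox v y) (c # cs) (w # ws)"
    by (cases vs; cases "tl vs") auto
  have "ennreal (norm (conv_prod (b # c # cs) y)) = ennreal (norm (LINT z|lebesgue. b (y - z) * conv_prod (c # cs) z))"
    by (simp add: conv_def)
  also have "\<dots> \<le> (\<integral>\<^sup>+z. norm (b (y - z) * conv_prod (c # cs) z) \<partial>lebesgue)"
    by (rule norm_integral_le_nn)
  also have "\<dots> \<le> (\<integral>\<^sup>+z. ennreal (Nbox v (y - z)) * Dv (w # ws) z \<partial>lebesgue)"
  proof (rule nn_integral_mono)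
    fix z
    have "ennreal (norm (b (y - z) * conv_prod (c # cs) z)) = ennreal (norm (b (y - z))) * ennreal (norm (conv_prod (c # cs) z))"
      by (simp add: norm_mult ennreal_mult)
    also have "\<dots> \<le> ennreal (Nbox v (y - z)) * Dv (w # ws) z"
      using bv "3.IH"[OF rest] by (intro mult_mono) (auto intro: ennreal_leI)
    finally show "ennreal (norm (b (y - z) * conv_prod (c # cs) z)) \<le> \<dots>" .
  qed
  also have "\<dots> = Dv vs y"
    unfolding vs by (simp add: nn_integral_completion)
  finally show ?case .
qed

lemma cis_measurable[measurable]: "cis \<in> borel_measurable borel"
  by (rule borel_measurable_continuous_onI) (use continuous_on_cis[OF continuous_on_id] in simp)

lemma gauss1:
  assumes e: "0 < e"
  shows "(\<integral>s. complex_of_real (exp (- pi * e\<^sup>2 * s\<^sup>2)) * cis (2 * pi * t * s) \<partial>lborel) = complex_of_real (exp (- pi * t\<^sup>2 / e\<^sup>2) / e)"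
proof -
  define c where "c = sqrt (2*pi) * e"
  define \<theta> where "\<theta> = 2 * pi * t / c"
  have c: "c > 0" using e by (simp add: c_def)
  have A: "(\<integral>x. std_normal_density x *\<^sub>R iexp (\<theta> * x) \<partial>lborel) = complex_of_real (exp (-(\<theta>\<^sup>2)/2))"
  proof -
    have "char std_normal_distribution \<theta> = complex_of_real (exp (-(\<theta>\<^sup>2)/2))"
      by (simp add: char_std_normal_distribution)
    then show ?thesis unfolding char_def
      by (subst (asm) integral_density) (auto simp: normal_density_nonneg)
  qed
  have B: "(\<integral>x. std_normal_density x *\<^sub>R iexp (\<theta> * x) \<partial>lborel) = c *\<^sub>R (\<integral>s. std_normal_density (c * s) *\<^sub>R iexp (\<theta> * (c * s)) \<partial>lborel)"
    using lborel_integral_real_affine[of c "\<lambda>x. std_normal_density x *\<^sub>R iexp (\<theta> * x)" 0] c by simp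
  have C: "std_normal_density (c * s) *\<^sub>R iexp (\<theta> * (c * s)) = (1/sqrt(2*pi)) *\<^sub>R (complex_of_real (exp (- pi * e\<^sup>2 * s\<^sup>2)) * cis (2 * pi * t * s))" for s
  proof -
    have h1: "- (c * s)\<^sup>2 / 2 = - pi * e\<^sup>2 * s\<^sup>2" unfolding c_def by (simp add: power_mult_distrib real_sqrt_pow2)
    have h2: "\<theta> * (c * s) = 2 * pi * t * s" unfolding \<theta>_def using c by (simp add: field_simps)
    show ?thesis unfolding h2 std_normal_density_def h1
      by (simp add: cis_conv_exp scaleR_conv_of_real)
  qed
  have "complex_of_real (exp (-(\<theta>\<^sup>2)/2)) = (c / sqrt (2*pi)) *\<^sub>R (\<integral>s. complex_of_real (exp (- pi * e\<^sup>2 * s\<^sup>2)) * cis (2 * pi * t * s) \<partial>lborel)"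
    unfolding A[symmetric] B C by simp
  also have "c / sqrt (2*pi) = e" unfolding c_def by simp
  finally have D: "complex_of_real (exp (-(\<theta>\<^sup>2)/2)) = e *\<^sub>R (\<integral>s. complex_of_real (exp (- pi * e\<^sup>2 * s\<^sup>2)) * cis (2 * pi * t * s) \<partial>lborel)" .
  have E: "\<theta>\<^sup>2/2 = pi * t\<^sup>2 / e\<^sup>2"
    unfolding \<theta>_def c_def using e by (simp add: power_mult_distrib power_divide field_simps power2_eq_square)
  have E': "-(\<theta>\<^sup>2)/2 = - pi * t\<^sup>2 / e\<^sup>2" using E by simp
  let ?I = "(\<integral>s. complex_of_real (exp (- pi * e\<^sup>2 * s\<^sup>2)) * cis (2 * pi * t * s) \<partial>lborel)"
  have D': "complex_of_real (exp (- pi * t\<^sup>2 / e\<^sup>2)) = complex_of_real e * ?I"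
    using D[unfolded E'] by (simp add: scaleR_conv_of_real)
  have "?I = complex_of_real (1/e) * (complex_of_real e * ?I)" using e by simp
  also have "\<dots> = complex_of_real (exp (- pi * t\<^sup>2 / e\<^sup>2) / e)" unfolding D'[symmetric] by simp
  finally show ?thesis .
qed

lemma sum_basis_inner:
  fixes f :: "'a::euclidean_space \<Rightarrow> real"
  shows "c \<in> Basis \<Longrightarrow> (\<Sum>b\<in>Basis. f b *\<^sub>R b) \<bullet> c = f c"
  by (simp add: inner_sum_left inner_Basis if_distrib cong: if_cong)

lemma sum_basis_inner_left:
  fixes f :: "'a::euclidean_space \<Rightarrow> real"
  shows "u \<bullet> (\<Sum>b\<in>Basis. f b *\<^sub>R b) = (\<Sum>b\<in>Basis. (u \<bullet> b) * f b)"
  by (simp add: inner_sum_right mult.commute)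

lemma sum_basis_norm2:
  fixes f :: "'a::euclidean_space \<Rightarrow> real"
  shows "(norm (\<Sum>b\<in>Basis. f b *\<^sub>R b))\<^sup>2 = (\<Sum>b\<in>Basis. (f b)\<^sup>2)"
proof -
  let ?y = "\<Sum>b\<in>Basis. f b *\<^sub>R b"
  have "?y \<bullet> ?y = (\<Sum>b\<in>Basis. (?y \<bullet> b) * f b)" by (rule sum_basis_inner_left)
  also have "\<dots> = (\<Sum>b\<in>Basis. (f b)\<^sup>2)" by (intro sum.cong) (auto simp: sum_basis_inner power2_eq_square)
  finally show ?thesis unfolding power2_norm_eq_inner .
qed

lemma norm2_basis:
  fixes x :: "'a::euclidean_space"
  shows "(norm x)\<^sup>2 = (\<Sum>b\<in>Basis. (x \<bullet> b)\<^sup>2)"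
  using sum_basis_norm2[of "\<lambda>b. x \<bullet> b"] by (simp add: euclidean_representation)

lemma normal_density_e:
  assumes e: "0 < e"
  shows "normal_density 0 (e / sqrt (2*pi)) s = exp (- pi * s\<^sup>2 / e\<^sup>2) / e"
proof -
  have a: "2 * pi * (e / sqrt (2*pi))\<^sup>2 = e\<^sup>2" by (simp add: power_divide real_sqrt_pow2)
  have b: "2 * (e / sqrt (2*pi))\<^sup>2 = e\<^sup>2 / pi" by (simp add: power_divide real_sqrt_pow2)
  have c: "- s\<^sup>2 / (e\<^sup>2 / pi) = - pi * s\<^sup>2 / e\<^sup>2" by (simp add: field_simps)
  show ?thesis unfolding normal_density_def a b using e by (simp add: c)
qed

lemma gauss1_integrable:
  assumes e: "0 < e"
  shows "integrable lborel (\<lambda>s. exp (- pi * e\<^sup>2 * s\<^sup>2))"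
proof -
  have "(\<lambda>s. exp (- pi * e\<^sup>2 * s\<^sup>2)) = (\<lambda>s. (1/e) * normal_density 0 ((1/e) / sqrt (2*pi)) s)"
  proof
    fix s
    have "normal_density 0 ((1/e) / sqrt (2*pi)) s = exp (- pi * s\<^sup>2 / (1/e)\<^sup>2) / (1/e)"
      by (rule normal_density_e) (use e in simp)
    then show "exp (- pi * e\<^sup>2 * s\<^sup>2) = (1/e) * normal_density 0 ((1/e) / sqrt (2*pi)) s"
      using e by (simp add: power_divide field_simps)
  qed
  then show ?thesis by (subst \<open>(\<lambda>s. _) = _\<close>) (rule integrable_mult_right, rule integrable_normal_density, use e in simp)
qed

lemma gauss1_integrable_c:
  assumes e: "0 < e"
  shows "integrable lborel (\<lambda>s. complex_of_real (exp (- pi * e\<^sup>2 * s\<^sup>2)) * cis (2 * pi * t * s))"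
  by (rule Bochner_Integration.integrable_bound[OF gauss1_integrable[OF e]]) (auto simp: norm_mult)

definition gw :: "real \<Rightarrow> 'a::euclidean_space \<Rightarrow> real" where
  "gw e \<xi> = exp (- pi * e\<^sup>2 * (norm \<xi>)\<^sup>2)"

definition gk :: "real \<Rightarrow> 'a::euclidean_space \<Rightarrow> real" where
  "gk e u = (\<Prod>b\<in>Basis. normal_density 0 (e / sqrt (2*pi)) (u \<bullet> b))"

lemma gw_measurable[measurable]: "gw e \<in> borel_measurable borel"
  unfolding gw_def by measurable
lemma gk_measurable[measurable]: "gk e \<in> borel_measurable borel"
  unfolding gk_def by measurable

lemma gk_nonneg: "0 \<le> gk e u"
  unfolding gk_def by (auto intro!: prod_nonneg normal_density_nonneg)

lemma gk_uminus: "gk e (- u) = gk e u"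
  unfolding gk_def normal_density_def by simp

lemma gw_prod: "gw e \<xi> = (\<Prod>b\<in>Basis. exp (- pi * e\<^sup>2 * (\<xi> \<bullet> b)\<^sup>2))"
  unfolding gw_def norm2_basis by (simp add: exp_sum[symmetric] sum_distrib_left)

lemma gk_nn_integral:
  assumes e: "0 < e"
  shows "(\<integral>\<^sup>+u. ennreal (gk e u) \<partial>(lborel :: 'a::euclidean_space measure)) = 1"
proof -
  have "(\<integral>\<^sup>+u. ennreal (gk e u) \<partial>(lborel :: 'a measure)) = (\<integral>\<^sup>+u. (\<Prod>b\<in>Basis. ennreal (normal_density 0 (e / sqrt (2*pi)) (u \<bullet> b))) \<partial>(lborel :: 'a measure))"
    unfolding gk_def by (subst prod_ennreal) (auto simp: normal_density_nonneg)
  also have "\<dots> = (\<Prod>b\<in>(Basis::'a set). (\<integral>\<^sup>+s. ennreal (normal_density 0 (e / sqrt (2*pi)) s) \<partial>lborel))"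
    by (rule nn_integral_lborel_prod) auto
  also have "\<dots> = 1"
  proof -
    have "(\<integral>\<^sup>+s. ennreal (normal_density 0 (e / sqrt (2*pi)) s) \<partial>lborel) = 1"
      using e by (subst nn_integral_eq_integral) (auto simp: normal_density_nonneg integrable_normal_density)
    then show ?thesis by simp
  qed
  finally show ?thesis .
qed

lemma gw_nn_integral_finite:
  assumes e: "0 < e"
  shows "(\<integral>\<^sup>+\<xi>. ennreal (gw e \<xi>) \<partial>(lborel :: 'a::euclidean_space measure)) < \<infinity>"
proof -
  have "(\<integral>\<^sup>+\<xi>. ennreal (gw e \<xi>) \<partial>(lborel :: 'a measure)) = (\<integral>\<^sup>+\<xi>. (\<Prod>b\<in>Basis. ennreal (exp (- pi * e\<^sup>2 * (\<xi> \<bullet> b)\<^sup>2))) \<partial>(lborel :: 'a measure))"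
    unfolding gw_prod by (subst prod_ennreal) auto
  also have "\<dots> = (\<Prod>b\<in>(Basis::'a set). (\<integral>\<^sup>+s. ennreal (exp (- pi * e\<^sup>2 * s\<^sup>2)) \<partial>lborel))"
    by (rule nn_integral_lborel_prod) auto
  also have "\<dots> < \<infinity>"
  proof -
    have "(\<integral>\<^sup>+s. ennreal (exp (- pi * e\<^sup>2 * s\<^sup>2)) \<partial>lborel) = ennreal (\<integral>s. exp (- pi * e\<^sup>2 * s\<^sup>2) \<partial>lborel)"
      using gauss1_integrable[OF e] by (subst nn_integral_eq_integral) auto
    then show ?thesis by (simp add: ennreal_power)
  qed
  finally show ?thesis .
qed

lemma gw_integrable:
  assumes e: "0 < e"
  shows "integrable (lborel :: 'a::euclidean_space measure) (gw e)"
  using gw_nn_integral_finite[OF e, where 'a='a]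
  by (intro integrableI_bounded) (auto simp: gw_def)

lemma cis_sum: "finite I \<Longrightarrow> cis (\<Sum>i\<in>I. f i) = (\<Prod>i\<in>I. cis (f i))"
  by (induction I rule: finite_induct) (auto simp: cis_mult[symmetric])

theorem gauss_d:
  assumes e: "0 < e"
  shows "(\<integral>\<xi>. complex_of_real (gw e \<xi>) * cis (2 * pi * (u \<bullet> \<xi>)) \<partial>lborel) = complex_of_real (gk e (u::'a::euclidean_space))"
proof -
  interpret product_sigma_finite "\<lambda>_::'a. lborel :: real measure" by standard
  have "(\<integral>\<xi>. complex_of_real (gw e \<xi>) * cis (2 * pi * (u \<bullet> \<xi>)) \<partial>lborel)
     = (\<integral>f. complex_of_real (gw e (\<Sum>b\<in>Basis. f b *\<^sub>R b)) * cis (2 * pi * (u \<bullet> (\<Sum>b\<in>Basis. f b *\<^sub>R b))) \<partial>(\<Pi>\<^sub>M b\<in>Basis. lborel))"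
    by (subst lborel_eq[where 'a='a], subst integral_distr) (auto, measurable)
  also have "\<dots> = (\<integral>f. (\<Prod>b\<in>Basis. complex_of_real (exp (- pi * e\<^sup>2 * (f b)\<^sup>2)) * cis (2 * pi * (u \<bullet> b) * f b)) \<partial>(\<Pi>\<^sub>M b\<in>Basis. lborel))"
  proof (intro Bochner_Integration.integral_cong refl)
    fix f :: "'a \<Rightarrow> real"
    have "gw e (\<Sum>b\<in>Basis. f b *\<^sub>R b) = (\<Prod>b\<in>Basis. exp (- pi * e\<^sup>2 * (f b)\<^sup>2))"
      unfolding gw_def sum_basis_norm2 by (simp add: exp_sum[symmetric] sum_distrib_left)
    moreover have "cis (2 * pi * (u \<bullet> (\<Sum>b\<in>Basis. f b *\<^sub>R b))) = (\<Prod>b\<in>Basis. cis (2 * pi * (u \<bullet> b) * f b))"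
      unfolding sum_basis_inner_left by (simp add: sum_distrib_left cis_sum mult.assoc)
    ultimately show "complex_of_real (gw e (\<Sum>b\<in>Basis. f b *\<^sub>R b)) * cis (2 * pi * (u \<bullet> (\<Sum>b\<in>Basis. f b *\<^sub>R b)))
      = (\<Prod>b\<in>Basis. complex_of_real (exp (- pi * e\<^sup>2 * (f b)\<^sup>2)) * cis (2 * pi * (u \<bullet> b) * f b))"
      by (simp add: prod.distrib)
  qed
  also have "\<dots> = (\<Prod>b\<in>Basis. (\<integral>s. complex_of_real (exp (- pi * e\<^sup>2 * s\<^sup>2)) * cis (2 * pi * (u \<bullet> b) * s) \<partial>lborel))"
    by (rule product_integral_prod[where f="\<lambda>b s. complex_of_real (exp (- pi * e\<^sup>2 * s\<^sup>2)) * cis (2 * pi * (u \<bullet> b) * s)"])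
       (simp, rule gauss1_integrable_c[OF e])
  also have "\<dots> = (\<Prod>b\<in>Basis. complex_of_real (exp (- pi * (u \<bullet> b)\<^sup>2 / e\<^sup>2) / e))"
    by (intro prod.cong refl gauss1[OF e])
  also have "\<dots> = complex_of_real (gk e u)"
    unfolding gk_def normal_density_e[OF e] by simp
  finally show ?thesis .
qed

lemma nn_integral_reflect:
  fixes F :: "'a::euclidean_space \<Rightarrow> ennreal"
  assumes [measurable]: "F \<in> borel_measurable borel"
  shows "(\<integral>\<^sup>+y. F (x - y) \<partial>lborel) = (\<integral>\<^sup>+y. F y \<partial>lborel)"
proof -
  have eq: "(lborel::'a measure) = density (distr lborel borel (\<lambda>y. x + (-1) *\<^sub>R y)) (\<lambda>_. 1)"
    using lborel_affine[of "-1" x] by simp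
  have "(\<integral>\<^sup>+y. F y \<partial>lborel) = (\<integral>\<^sup>+y. F y \<partial>density (distr lborel borel (\<lambda>y. x + (-1) *\<^sub>R y)) (\<lambda>_. 1))"
    by (rule arg_cong[where f="\<lambda>M. nn_integral M F", OF eq])
  also have "\<dots> = (\<integral>\<^sup>+y. F (x - y) \<partial>lborel)"
    by (simp add: density_1 nn_integral_distr)
  finally show ?thesis ..
qed

lemma nn_integral_translate2:
  fixes F :: "'a::euclidean_space \<Rightarrow> ennreal"
  assumes [measurable]: "F \<in> borel_measurable borel"
  shows "(\<integral>\<^sup>+x. F (x - y) \<partial>lborel) = (\<integral>\<^sup>+x. F x \<partial>lborel)"
  using nn_integral_translate[of F "-y"] by simp

definition ift :: "('a::euclidean_space \<Rightarrow> complex) \<Rightarrow> 'a \<Rightarrow> complex" where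
  "ift g \<xi> = (\<integral>w. g w * cis (2 * pi * (w \<bullet> \<xi>)) \<partial>lborel)"

lemma ift_measurable[measurable]:
  assumes [measurable]: "g \<in> borel_measurable borel"
  shows "ift g \<in> borel_measurable borel"
  unfolding ift_def by measurable

lemma ift_bound:
  assumes "integrable lborel g"
  shows "norm (ift g \<xi>) \<le> (\<integral>w. norm (g w) \<partial>lborel)"
  unfolding ift_def by (rule order_trans[OF integral_norm_bound]) (simp add: norm_mult)

lemma integrable_pair_bound:
  fixes f :: "'a::euclidean_space \<times> 'b::euclidean_space \<Rightarrow> 'c::{banach, second_countable_topology}"
  assumes [measurable]: "f \<in> borel_measurable (lborel \<Otimes>\<^sub>M lborel)"
    and fin: "(\<integral>\<^sup>+x. \<integral>\<^sup>+y. norm (f (x, y)) \<partial>lborel \<partial>lborel) < \<infinity>"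
  shows "integrable (lborel \<Otimes>\<^sub>M lborel) f"
proof (rule integrableI_bounded)
  show "(\<integral>\<^sup>+p. norm (f p) \<partial>(lborel \<Otimes>\<^sub>M lborel)) < \<infinity>"
    using fin by (subst lborel.nn_integral_fst[symmetric]) auto
qed simp

lemma nn_integral_prod_split:
  fixes f :: "'a::euclidean_space \<Rightarrow> ennreal" and g :: "'b::euclidean_space \<Rightarrow> ennreal"
  assumes [measurable]: "f \<in> borel_measurable borel" "g \<in> borel_measurable borel"
  shows "(\<integral>\<^sup>+x. \<integral>\<^sup>+y. f x * g y \<partial>lborel \<partial>lborel) = (\<integral>\<^sup>+x. f x \<partial>lborel) * (\<integral>\<^sup>+y. g y \<partial>lborel)"
  by (simp add: nn_integral_cmult nn_integral_multc)

lemma nn_integral_norm_finite: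
  assumes "integrable lborel (g :: 'a::euclidean_space \<Rightarrow> 'c::{banach, second_countable_topology})"
  shows "(\<integral>\<^sup>+x. ennreal (norm (g x)) \<partial>lborel) < \<infinity>"
  using assms by (simp add: integrable_iff_bounded)

lemma cnj_measurable[measurable]: "cnj \<in> borel_measurable borel"
  by (rule borel_measurable_continuous_onI) (use continuous_on_cnj[OF continuous_on_id] in simp)

lemma meas_prod_type:
  fixes f :: "'a::second_countable_topology \<times> 'b::second_countable_topology \<Rightarrow> 'c::topological_space"
  shows "f \<in> borel_measurable (borel \<Otimes>\<^sub>M borel) \<Longrightarrow> f \<in> borel_measurable borel"
  by (simp add: borel_prod)

lemma inner_measurable[measurable]: "(\<lambda>x::'a::euclidean_space. x \<bullet> \<xi>) \<in> borel_measurable borel"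
  by (intro borel_measurable_continuous_onI continuous_intros)

lemma fst_measurable[measurable]: "fst \<in> borel_measurable (borel :: ('a::euclidean_space \<times> 'b::euclidean_space) measure)"
  by (intro borel_measurable_continuous_onI continuous_intros)
lemma snd_measurable[measurable]: "snd \<in> borel_measurable (borel :: ('a::euclidean_space \<times> 'b::euclidean_space) measure)"
  by (intro borel_measurable_continuous_onI continuous_intros)

lemma nn_integral_pair_prod:
  fixes F :: "'a::euclidean_space \<times> 'b::euclidean_space \<Rightarrow> ennreal"
  assumes [measurable]: "F \<in> borel_measurable borel"
  shows "(\<integral>\<^sup>+p. F p \<partial>lborel) = (\<integral>\<^sup>+x. \<integral>\<^sup>+y. F (x, y) \<partial>lborel \<partial>lborel)"
proof -
  have [measurable]: "F \<in> borel_measurable (lborel \<Otimes>\<^sub>M lborel)" by (simp add: lborel_prod)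
  show ?thesis by (subst lborel_prod[symmetric], subst lborel.nn_integral_fst[symmetric]) auto
qed

lemma integral_pair_prod:
  fixes F :: "'a::euclidean_space \<times> 'b::euclidean_space \<Rightarrow> 'c::{banach, second_countable_topology}"
  assumes "integrable lborel F"
  shows "(\<integral>p. F p \<partial>lborel) = (\<integral>x. \<integral>y. F (x, y) \<partial>lborel \<partial>lborel)"
  using assms by (subst lborel_prod[symmetric], subst lborel_pair.integral_fst'[symmetric]) (auto simp: lborel_prod)

lemma integrable_prod_type:
  fixes F :: "'a::euclidean_space \<times> 'b::euclidean_space \<Rightarrow> 'c::{banach, second_countable_topology}"
  assumes [measurable]: "F \<in> borel_measurable borel"
    and fin: "(\<integral>\<^sup>+x. \<integral>\<^sup>+y. norm (F (x, y)) \<partial>lborel \<partial>lborel) < \<infinity>"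
  shows "integrable lborel F"
proof (rule integrableI_bounded)
  show "(\<integral>\<^sup>+p. norm (F p) \<partial>lborel) < \<infinity>"
    using fin by (subst nn_integral_pair_prod) auto
qed simp

lemma bessel_e:
  fixes g :: "'a::euclidean_space \<Rightarrow> complex"
  assumes g[measurable]: "g \<in> borel_measurable borel" and gi: "integrable lborel g" and e: "0 < e"
  shows "(\<integral>\<^sup>+\<xi>. ennreal ((norm (ift g \<xi>))\<^sup>2 * gw e \<xi>) \<partial>lborel) \<le> (\<integral>\<^sup>+w. ennreal ((norm (g w))\<^sup>2) \<partial>lborel)"
proof -
  define g2 where "g2 p = g (fst p) * cnj (g (snd p))" for p :: "'a \<times> 'a"
  define K where "K = (\<integral>w. norm (g w) \<partial>lborel)"
  have g2m'[measurable]: "g2 \<in> borel_measurable (borel \<Otimes>\<^sub>M borel)" unfolding g2_def by measurable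
  have g2m[measurable]: "g2 \<in> borel_measurable borel" by (rule meas_prod_type) measurable
  have Nfin: "(\<integral>\<^sup>+x. ennreal (norm (g x)) \<partial>lborel) < \<infinity>" using gi by (rule nn_integral_norm_finite)
  have NN: "(\<integral>\<^sup>+x. \<integral>\<^sup>+y. ennreal (norm (g x)) * ennreal (norm (g y)) \<partial>lborel \<partial>lborel) < \<infinity>"
    using Nfin by (simp add: nn_integral_cmult nn_integral_multc ennreal_mult_less_top)
  have hi: "integrable lborel (\<lambda>p. g2 p * cis (2 * pi * ((fst p - snd p) \<bullet> \<xi>)))" for \<xi>
  proof (rule integrable_prod_type)
    show "(\<integral>\<^sup>+x. \<integral>\<^sup>+y. ennreal (norm (g2 (x, y) * cis (2 * pi * ((fst (x, y) - snd (x, y)) \<bullet> \<xi>)))) \<partial>lborel \<partial>lborel) < \<infinity>"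
      using NN by (simp add: g2_def norm_mult ennreal_mult)
  qed (rule meas_prod_type, measurable)
  have C1: "complex_of_real ((norm (ift g \<xi>))\<^sup>2) = (\<integral>p. g2 p * cis (2 * pi * ((fst p - snd p) \<bullet> \<xi>)) \<partial>lborel)" for \<xi>
  proof -
    have "complex_of_real ((norm (ift g \<xi>))\<^sup>2) = ift g \<xi> * cnj (ift g \<xi>)" by (rule complex_norm_square)
    also have "cnj (ift g \<xi>) = (\<integral>y. cnj (g y) * cis (- (2 * pi * (y \<bullet> \<xi>))) \<partial>lborel)"
      unfolding ift_def by (simp add: Bochner_Integration.integral_cnj[symmetric] cis_cnj)
    also have "ift g \<xi> * (\<integral>y. cnj (g y) * cis (- (2 * pi * (y \<bullet> \<xi>))) \<partial>lborel)
       = (\<integral>x. \<integral>y. (g x * cis (2 * pi * (x \<bullet> \<xi>))) * (cnj (g y) * cis (- (2 * pi * (y \<bullet> \<xi>)))) \<partial>lborel \<partial>lborel)"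
      unfolding ift_def by simp
    also have "\<dots> = (\<integral>x. \<integral>y. g2 (x, y) * cis (2 * pi * ((fst (x, y) - snd (x, y)) \<bullet> \<xi>)) \<partial>lborel \<partial>lborel)"
    proof (intro Bochner_Integration.integral_cong refl)
      fix x y :: 'a
      have "cis (2 * pi * (x \<bullet> \<xi>)) * cis (- (2 * pi * (y \<bullet> \<xi>))) = cis (2 * pi * ((x - y) \<bullet> \<xi>))"
        by (simp add: cis_mult inner_diff_left algebra_simps)
      then show "(g x * cis (2 * pi * (x \<bullet> \<xi>))) * (cnj (g y) * cis (- (2 * pi * (y \<bullet> \<xi>))))
          = g2 (x, y) * cis (2 * pi * ((fst (x, y) - snd (x, y)) \<bullet> \<xi>))"
        unfolding g2_def by (simp add: mult_ac)
    qed
    also have "\<dots> = (\<integral>p. g2 p * cis (2 * pi * ((fst p - snd p) \<bullet> \<xi>)) \<partial>lborel)"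
      by (rule integral_pair_prod[symmetric]) (rule hi)
    finally show ?thesis .
  qed
  have gkm[measurable]: "(\<lambda>p::'a\<times>'a. gk e (fst p - snd p)) \<in> borel_measurable borel" by measurable
  have N2: "(\<integral>\<^sup>+p. ennreal (norm (g2 p)) \<partial>lborel) < \<infinity>"
    using NN by (subst nn_integral_pair_prod) (auto simp: g2_def norm_mult ennreal_mult)
  have C2: "(\<integral>\<xi>. complex_of_real (gw e \<xi>) * complex_of_real ((norm (ift g \<xi>))\<^sup>2) \<partial>lborel)
      = (\<integral>p. g2 p * complex_of_real (gk e (fst p - snd p)) \<partial>lborel)"
  proof -
    have "(\<integral>\<xi>. complex_of_real (gw e \<xi>) * complex_of_real ((norm (ift g \<xi>))\<^sup>2) \<partial>lborel)
       = (\<integral>\<xi>. \<integral>p. complex_of_real (gw e \<xi>) * (g2 p * cis (2 * pi * ((fst p - snd p) \<bullet> \<xi>))) \<partial>lborel \<partial>lborel)"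
      unfolding C1 by simp
    also have "\<dots> = (\<integral>p. \<integral>\<xi>. complex_of_real (gw e \<xi>) * (g2 p * cis (2 * pi * ((fst p - snd p) \<bullet> \<xi>))) \<partial>lborel \<partial>lborel)"
    proof (rule lborel_pair.Fubini_integral[symmetric])
      show "integrable (lborel \<Otimes>\<^sub>M lborel) (\<lambda>(\<xi>::'a, p::'a\<times>'a). complex_of_real (gw e \<xi>) * (g2 p * cis (2 * pi * ((fst p - snd p) \<bullet> \<xi>))))"
      proof (rule integrable_pair_bound)
        have "(\<integral>\<^sup>+\<xi>. \<integral>\<^sup>+p. ennreal (norm (complex_of_real (gw e \<xi>) * (g2 p * cis (2 * pi * ((fst p - snd p) \<bullet> \<xi>))))) \<partial>lborel \<partial>lborel)
          = (\<integral>\<^sup>+\<xi>. \<integral>\<^sup>+p. ennreal (gw e \<xi>) * ennreal (norm (g2 p)) \<partial>lborel \<partial>(lborel::'a measure))"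
          by (intro nn_integral_cong) (auto simp: norm_mult ennreal_mult gw_def)
        also have "\<dots> = (\<integral>\<^sup>+\<xi>. ennreal (gw e \<xi>) \<partial>(lborel::'a measure)) * (\<integral>\<^sup>+p. ennreal (norm (g2 p)) \<partial>lborel)"
          by (rule nn_integral_prod_split) auto
        also have "\<dots> < \<infinity>" using N2 gw_nn_integral_finite[OF e, where 'a='a] by (simp add: ennreal_mult_less_top)
        finally show "(\<integral>\<^sup>+\<xi>. \<integral>\<^sup>+p. ennreal (norm (case (\<xi>, p) of (\<xi>, p) \<Rightarrow> complex_of_real (gw e \<xi>) * (g2 p * cis (2 * pi * ((fst p - snd p) \<bullet> \<xi>))))) \<partial>lborel \<partial>lborel) < \<infinity>"
          by simp
      qed measurable
    qed
    also have "\<dots> = (\<integral>p. g2 p * (\<integral>\<xi>. complex_of_real (gw e \<xi>) * cis (2 * pi * ((fst p - snd p) \<bullet> \<xi>)) \<partial>lborel) \<partial>lborel)"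
      by (intro Bochner_Integration.integral_cong refl) (simp add: mult_ac)
    also have "\<dots> = (\<integral>p. g2 p * complex_of_real (gk e (fst p - snd p)) \<partial>lborel)"
      by (simp add: gauss_d[OF e])
    finally show ?thesis .
  qed
  define G where "G = (\<integral>\<^sup>+w. ennreal ((norm (g w))\<^sup>2) \<partial>lborel)"
  have Ki: "integrable lborel (\<lambda>\<xi>. (norm (ift g \<xi>))\<^sup>2 * gw e \<xi>)"
  proof (rule Bochner_Integration.integrable_bound)
    show "integrable lborel (\<lambda>\<xi>::'a. K\<^sup>2 * gw e \<xi>)" using gw_integrable[OF e, where 'a='a] by simp
    show "AE \<xi> in lborel. norm ((norm (ift g \<xi>))\<^sup>2 * gw e \<xi>) \<le> norm (K\<^sup>2 * gw e \<xi>)"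
    proof (intro AE_I2)
      fix \<xi>
      have "norm (ift g \<xi>) \<le> K" unfolding K_def by (rule ift_bound[OF gi])
      then have "(norm (ift g \<xi>))\<^sup>2 \<le> K\<^sup>2" by (intro power_mono) auto
      then show "norm ((norm (ift g \<xi>))\<^sup>2 * gw e \<xi>) \<le> norm (K\<^sup>2 * gw e \<xi>)"
        by (auto simp: gw_def abs_mult intro!: mult_right_mono)
    qed
  qed measurable
  define J where "J = (\<integral>\<xi>. (norm (ift g \<xi>))\<^sup>2 * gw e \<xi> \<partial>lborel)"
  have "(\<integral>\<^sup>+\<xi>. ennreal ((norm (ift g \<xi>))\<^sup>2 * gw e \<xi>) \<partial>lborel) = ennreal J"
    unfolding J_def using Ki by (subst nn_integral_eq_integral) (auto simp: gw_def)
  also have "ennreal J \<le> ennreal (norm (\<integral>p. g2 p * complex_of_real (gk e (fst p - snd p)) \<partial>lborel))"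
  proof -
    have "complex_of_real J = (\<integral>\<xi>. complex_of_real (gw e \<xi>) * complex_of_real ((norm (ift g \<xi>))\<^sup>2) \<partial>lborel)"
      unfolding J_def by (simp flip: of_real_mult of_real_power add: mult.commute)
    then have "norm (complex_of_real J) = norm (\<integral>p. g2 p * complex_of_real (gk e (fst p - snd p)) \<partial>lborel)"
      unfolding C2 by simp
    then show ?thesis by (intro ennreal_leI) auto
  qed
  also have "\<dots> \<le> (\<integral>\<^sup>+p. ennreal (norm (g2 p * complex_of_real (gk e (fst p - snd p)))) \<partial>lborel)"
    by (rule norm_integral_le_nn)
  also have "\<dots> \<le> (\<integral>\<^sup>+p. ennreal (1/2) * (ennreal ((norm (g (fst p)))\<^sup>2 * gk e (fst p - snd p)) + ennreal ((norm (g (snd p)))\<^sup>2 * gk e (fst p - snd p))) \<partial>lborel)"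
  proof (rule nn_integral_mono)
    fix p :: "'a \<times> 'a"
    let ?a = "norm (g (fst p))" and ?b = "norm (g (snd p))" and ?k = "gk e (fst p - snd p)"
    have k: "0 \<le> ?k" by (rule gk_nonneg)
    have "?a * ?b \<le> (?a\<^sup>2 + ?b\<^sup>2) / 2"
      using sum_squares_bound[of ?a ?b] by simp
    hence "?a * ?b * ?k \<le> (?a\<^sup>2 + ?b\<^sup>2) / 2 * ?k" using k by (rule mult_right_mono)
    then have "ennreal (norm (g2 p * complex_of_real ?k)) \<le> ennreal ((1/2) * (?a\<^sup>2 * ?k + ?b\<^sup>2 * ?k))"
      unfolding g2_def using k by (intro ennreal_leI) (simp add: norm_mult algebra_simps)
    also have "\<dots> = ennreal (1/2) * (ennreal (?a\<^sup>2 * ?k) + ennreal (?b\<^sup>2 * ?k))"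
      using k by (subst ennreal_mult) (auto simp: ennreal_plus)
    finally show "ennreal (norm (g2 p * complex_of_real ?k)) \<le> \<dots>" .
  qed
  also have "\<dots> = ennreal (1/2) * ((\<integral>\<^sup>+p. ennreal ((norm (g (fst p)))\<^sup>2 * gk e (fst p - snd p)) \<partial>lborel)
      + (\<integral>\<^sup>+p. ennreal ((norm (g (snd p)))\<^sup>2 * gk e (fst p - snd p)) \<partial>lborel))"
    by (subst nn_integral_cmult) (auto simp: nn_integral_add)
  also have "(\<integral>\<^sup>+p. ennreal ((norm (g (fst p)))\<^sup>2 * gk e (fst p - snd p)) \<partial>lborel) = G"
  proof -
    have "(\<integral>\<^sup>+p. ennreal ((norm (g (fst p)))\<^sup>2 * gk e (fst p - snd p)) \<partial>lborel)
        = (\<integral>\<^sup>+x. \<integral>\<^sup>+y. ennreal ((norm (g x))\<^sup>2) * ennreal (gk e (x - y)) \<partial>lborel \<partial>lborel)"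
      by (subst nn_integral_pair_prod) (auto simp: ennreal_mult gk_nonneg)
    also have "\<dots> = (\<integral>\<^sup>+x. ennreal ((norm (g x))\<^sup>2) * (\<integral>\<^sup>+y. ennreal (gk e (x - y)) \<partial>lborel) \<partial>lborel)"
      by (intro nn_integral_cong nn_integral_cmult) measurable
    also have "\<dots> = G"
      unfolding G_def by (simp add: nn_integral_reflect[where F="\<lambda>u. ennreal (gk e u)"] gk_nn_integral[OF e])
    finally show ?thesis .
  qed
  also have "(\<integral>\<^sup>+p. ennreal ((norm (g (snd p)))\<^sup>2 * gk e (fst p - snd p)) \<partial>lborel) = G"
  proof -
    have "(\<integral>\<^sup>+p. ennreal ((norm (g (snd p)))\<^sup>2 * gk e (fst p - snd p)) \<partial>lborel)
        = (\<integral>\<^sup>+x. \<integral>\<^sup>+y. ennreal ((norm (g y))\<^sup>2) * ennreal (gk e (x - y)) \<partial>lborel \<partial>lborel)"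
      by (subst nn_integral_pair_prod) (auto simp: ennreal_mult gk_nonneg)
    also have "\<dots> = (\<integral>\<^sup>+y. \<integral>\<^sup>+x. ennreal ((norm (g y))\<^sup>2) * ennreal (gk e (x - y)) \<partial>lborel \<partial>lborel)"
      by (rule lborel_pair.Fubini'[symmetric]) measurable
    also have "\<dots> = (\<integral>\<^sup>+y. ennreal ((norm (g y))\<^sup>2) * (\<integral>\<^sup>+x. ennreal (gk e (x - y)) \<partial>lborel) \<partial>lborel)"
      by (intro nn_integral_cong nn_integral_cmult) measurable
    also have "\<dots> = G"
      unfolding G_def by (simp add: nn_integral_translate2[where F="\<lambda>u. ennreal (gk e u)"] gk_nn_integral[OF e])
    finally show ?thesis .
  qed
  also have "ennreal (1/2) * (G + G) = G"
  proof -
    have "ennreal (1/2) * (G + G) = (ennreal (1/2) * 2) * G" by (simp add: mult_2 distrib_left mult.assoc)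
    also have "ennreal (1/2) * 2 = 1" using ennreal_mult[of "1/2" 2] by simp
    finally show ?thesis by simp
  qed
  finally show ?thesis unfolding G_def .
qed

theorem bessel:
  fixes g :: "'a::euclidean_space \<Rightarrow> complex"
  assumes g[measurable]: "g \<in> borel_measurable borel" and gi: "integrable lborel g"
  shows "(\<integral>\<^sup>+\<xi>. ennreal ((norm (ift g \<xi>))\<^sup>2) \<partial>lborel) \<le> (\<integral>\<^sup>+w. ennreal ((norm (g w))\<^sup>2) \<partial>lborel)"
proof -
  define u where "u n \<xi> = ennreal ((norm (ift g \<xi>))\<^sup>2 * gw (1 / real (Suc n)) \<xi>)" for n \<xi>
  have um: "u n \<in> borel_measurable lborel" for n unfolding u_def by measurable
  have lim: "(\<lambda>n. u n \<xi>) \<longlonglongrightarrow> ennreal ((norm (ift g \<xi>))\<^sup>2)" for \<xi>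
  proof -
    have "(\<lambda>n. 1 / real (Suc n)) \<longlonglongrightarrow> 0"
      using LIMSEQ_inverse_real_of_nat by (simp add: inverse_eq_divide)
    then have "(\<lambda>n. (norm (ift g \<xi>))\<^sup>2 * exp (- pi * (1 / real (Suc n))\<^sup>2 * (norm \<xi>)\<^sup>2)) \<longlonglongrightarrow> (norm (ift g \<xi>))\<^sup>2 * exp (- pi * 0\<^sup>2 * (norm \<xi>)\<^sup>2)"
      by (intro tendsto_intros)
    then show ?thesis unfolding u_def gw_def by (intro tendsto_ennrealI) simp
  qed
  have "(\<integral>\<^sup>+\<xi>. ennreal ((norm (ift g \<xi>))\<^sup>2) \<partial>lborel) = (\<integral>\<^sup>+\<xi>. liminf (\<lambda>n. u n \<xi>) \<partial>lborel)"
    by (intro nn_integral_cong) (simp add: lim_imp_Liminf[OF _ lim])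
  also have "\<dots> \<le> liminf (\<lambda>n. \<integral>\<^sup>+\<xi>. u n \<xi> \<partial>lborel)"
    by (rule nn_integral_liminf) (rule um)
  also have "\<dots> \<le> limsup (\<lambda>n. \<integral>\<^sup>+\<xi>. u n \<xi> \<partial>lborel)"
    by (rule Liminf_le_Limsup) simp
  also have "\<dots> \<le> (\<integral>\<^sup>+w. ennreal ((norm (g w))\<^sup>2) \<partial>lborel)"
    unfolding u_def by (rule Limsup_bounded, rule always_eventually, intro allI bessel_e g gi) simp
  finally show ?thesis .
qed

lemma ex_borel_complex:
  fixes g :: "'a \<Rightarrow> complex"
  assumes g: "g \<in> borel_measurable (completion M)"
  shows "\<exists>g'\<in>borel_measurable M. (AE x in M. g x = g' x)"
proof -
  have "(\<lambda>x. Re (g x)) \<in> borel_measurable (completion M)" "(\<lambda>x. Im (g x)) \<in> borel_measurable (completion M)"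
    using g by auto
  from this[THEN completion_ex_borel_measurable_real]
  obtain r i where r: "r \<in> borel_measurable M" "AE x in M. Re (g x) = r x"
    and i: "i \<in> borel_measurable M" "AE x in M. Im (g x) = i x" by blast
  show ?thesis
  proof (intro bexI)
    show "(\<lambda>x. complex_of_real (r x) + \<i> * complex_of_real (i x)) \<in> borel_measurable M"
      using r i by measurable
    show "AE x in M. g x = complex_of_real (r x) + \<i> * complex_of_real (i x)"
      using r(2) i(2) by eventually_elim (simp add: complex_eq_iff)
  qed
qed

lemma meas_AE_completion:
  fixes f g :: "'a \<Rightarrow> 'b::topological_space"
  assumes g: "g \<in> borel_measurable M" and ae: "AE x in M. f x = g x"
  shows "f \<in> borel_measurable (completion M)"
proof -
  obtain N where N: "N \<in> null_sets M" "{x\<in>space M. f x \<noteq> g x} \<subseteq> N"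
    using ae by (auto elim!: AE_E)
  show ?thesis
  proof (rule borel_measurableI)
    fix S :: "'b set" assume "open S"
    then have gS: "g -` S \<inter> space M \<in> sets M" using g by (auto intro: measurable_sets)
    have "f -` S \<inter> space (completion M) = ((g -` S \<inter> space M) - N) \<union> ((f -` S \<inter> space M) \<inter> N)"
      using N by auto
    also have "\<dots> \<in> sets (completion M)"
    proof (intro sets.Un)
      show "g -` S \<inter> space M - N \<in> sets (completion M)"
        using gS N(1) by (auto intro!: sets.Diff)
      show "f -` S \<inter> space M \<inter> N \<in> sets (completion M)"
        by (rule null_sets_completion[OF N(1)]) auto
    qed
    finally show "f -` S \<inter> space (completion M) \<in> sets (completion M)" .
  qed
qed

lemma integral_completion_AE:
  fixes f g :: "'a \<Rightarrow> 'b::{banach, second_countable_topology}"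
  assumes g: "g \<in> borel_measurable M" and ae: "AE x in M. f x = g x"
  shows "integral\<^sup>L (completion M) f = integral\<^sup>L M g"
proof -
  have "integral\<^sup>L (completion M) f = integral\<^sup>L (completion M) g"
    by (rule integral_cong_AE) (use meas_AE_completion[OF g ae] g ae in \<open>auto intro: measurable_completion AE_completion\<close>)
  also have "\<dots> = integral\<^sup>L M g" by (rule integral_completion[OF g])
  finally show ?thesis .
qed

lemma integral_reflect:
  fixes F :: "'a::euclidean_space \<Rightarrow> 'b::{banach, second_countable_topology}"
  assumes [measurable]: "F \<in> borel_measurable borel"
  shows "(\<integral>y. F (x - y) \<partial>lborel) = (\<integral>y. F y \<partial>lborel)"
proof -
  have eq: "(lborel::'a measure) = density (distr lborel borel (\<lambda>y. x + (-1) *\<^sub>R y)) (\<lambda>_. 1)"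
    using lborel_affine[of "-1" x] by simp
  have "(\<integral>y. F y \<partial>lborel) = (\<integral>y. F y \<partial>density (distr lborel borel (\<lambda>y. x + (-1) *\<^sub>R y)) (\<lambda>_. 1))"
    by (rule arg_cong[where f="\<lambda>M. integral\<^sup>L M F", OF eq])
  also have "\<dots> = (\<integral>y. F (x - y) \<partial>lborel)"
    by (simp add: density_1 integral_distr)
  finally show ?thesis ..
qed

lemma bump_Nbox:
  fixes b :: "'a::euclidean_space \<Rightarrow> complex"
  assumes "bump b"
  shows "\<exists>v. (\<forall>i\<in>Basis. 0 < v \<bullet> i) \<and> (\<forall>y. norm (b y) \<le> Nbox v y)"
proof -
  from assms obtain v where v: "\<forall>i\<in>Basis. 0 < v \<bullet> i"
    and le: "\<forall>y. norm (b y) \<le> indicator (cbox (-v) v) y / measure lebesgue (cbox (-v) v)"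
    unfolding bump_def by blast
  have "measure lebesgue (cbox (-v) v) = measure lborel (cbox (-v) v)" by simp
  then show ?thesis using v le unfolding Nbox_def by auto
qed

lemma conv_prod_Dv:
  fixes bs :: "('a::euclidean_space \<Rightarrow> complex) list"
  assumes "\<forall>b\<in>set bs. bump b"
  shows "\<exists>vs. length vs = length bs \<and> (\<forall>v\<in>set vs. \<forall>i\<in>Basis. 0 < v \<bullet> i) \<and> (\<forall>y. ennreal (norm (conv_prod bs y)) \<le> Dv vs y)"
proof -
  have "\<forall>b\<in>set bs. \<exists>v. (\<forall>i\<in>Basis. 0 < v \<bullet> i) \<and> (\<forall>y. norm (b y) \<le> Nbox v y)"
    using assms bump_Nbox by blast
  then obtain V where V: "\<And>b. b \<in> set bs \<Longrightarrow> (\<forall>i\<in>Basis. 0 < V b \<bullet> i) \<and> (\<forall>y. norm (b y) \<le> Nbox (V b) y)"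
    by metis
  have "list_all2 (\<lambda>b v. \<forall>y. norm (b y) \<le> Nbox v y) bs (map V bs)"
    using V by (simp add: list_all2_map2 list_all2_same)
  then show ?thesis using V conv_prod_bound by (intro exI[of _ "map V bs"]) auto
qed

lemma amgm_enn:
  assumes c: "0 < c" and a: "0 \<le> a"
  shows "ennreal a * Q \<le> ennreal (c/2) * ennreal (a\<^sup>2) + ennreal (1/(2*c)) * Q\<^sup>2"
proof (cases Q)
  case (real q)
  have "a * q \<le> c/2 * a\<^sup>2 + 1/(2*c) * q\<^sup>2"
  proof -
    have "0 \<le> (c * a - q)\<^sup>2 / (2*c)" using c by simp
    also have "(c * a - q)\<^sup>2 / (2*c) = c/2 * a\<^sup>2 + 1/(2*c) * q\<^sup>2 - a * q"
      using c by (simp add: power2_eq_square field_simps)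
    finally show ?thesis by simp
  qed
  then have le: "ennreal (a * q) \<le> ennreal (c/2 * a\<^sup>2 + 1/(2*c) * q\<^sup>2)" by (rule ennreal_leI)
  have q: "0 \<le> q" using real by simp
  have e1: "ennreal a * Q = ennreal (a * q)" using real a q by (simp add: ennreal_mult)
  have e2: "Q\<^sup>2 = ennreal (q\<^sup>2)" using real q by (simp add: ennreal_power)
  have p1: "0 \<le> c/2 * a\<^sup>2" "0 \<le> 1/(2*c) * q\<^sup>2" "0 \<le> c/2" "0 \<le> a\<^sup>2" "0 \<le> 1/(2*c)" "0 \<le> q\<^sup>2"
    using c by auto
  have e3: "ennreal (c/2 * a\<^sup>2 + 1/(2*c) * q\<^sup>2) = ennreal (c/2) * ennreal (a\<^sup>2) + ennreal (1/(2*c)) * ennreal (q\<^sup>2)"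
    by (simp only: ennreal_plus[OF p1(1,2)] ennreal_mult[OF p1(3,4)] ennreal_mult[OF p1(5,6)])
  show ?thesis unfolding e1 e2 e3[symmetric] by (rule le)
next
  case top
  then show ?thesis using c by (cases "a = 0") (auto simp: ennreal_mult_top)
qed

lemma half_absorb:
  fixes X B :: ennreal
  assumes X: "X < \<infinity>" and le: "X \<le> B + ennreal (1/2) * X"
  shows "X \<le> 2 * B"
proof (cases B)
  case (real b)
  from X obtain x where x: "X = ennreal x" "0 \<le> x" by (cases X) auto
  have h: "ennreal (1/2) * ennreal x = ennreal (1/2 * x)" by (rule ennreal_mult[symmetric]) (use x in auto)
  have "ennreal x \<le> ennreal b + ennreal (1/2 * x)" using le unfolding x(1) real h .
  also have "ennreal b + ennreal (1/2 * x) = ennreal (b + 1/2 * x)" by (rule ennreal_plus[symmetric]) (use x real in auto)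
  finally have "ennreal x \<le> ennreal (b + 1/2 * x)" .
  then have "x \<le> b + 1/2 * x" by (subst (asm) ennreal_le_iff) (use x real in auto)
  then have "x \<le> 2 * b" by simp
  then have "ennreal x \<le> ennreal (2 * b)" by (rule ennreal_leI)
  also have "ennreal (2 * b) = 2 * ennreal b" using real by (subst ennreal_mult) auto
  finally show ?thesis using x real by simp
qed simp

locale core_setup =
  fixes A :: "'a::euclidean_space \<Rightarrow> 'a \<Rightarrow> complex" and f :: "'a \<Rightarrow> complex" and M :: real and k :: nat
  assumes Am[measurable]: "(\<lambda>(x, y). A x y) \<in> borel_measurable (borel \<Otimes>\<^sub>M borel)"
    and fm[measurable]: "f \<in> borel_measurable borel" and fi: "integrable lborel f"
    and AM: "AE x in lborel. (\<integral>\<^sup>+y. ennreal (norm (A x y)) \<partial>lborel) \<le> ennreal M"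
    and Dom: "AE x in lborel. \<forall>H. H \<in> borel_measurable borel \<longrightarrow>
                (\<integral>\<^sup>+y. ennreal (norm (A x y)) * H (x - y) \<partial>lborel) \<le> (MS ^^ k) H x"
begin

lemma A_slice[measurable]: "A x \<in> borel_measurable borel"
  using measurable_Pair2[OF Am, of x] by simp

definition G :: "'a \<Rightarrow> complex" where
  "G w = (\<integral>x. A x (x - w) * f x \<partial>lborel)"

lemma G_measurable[measurable]: "G \<in> borel_measurable borel"
  unfolding G_def by measurable

lemma G_norm: "ennreal (norm (G w)) \<le> (\<integral>\<^sup>+x. ennreal (norm (A x (x - w))) * ennreal (norm (f x)) \<partial>lborel)"
  unfolding G_def using norm_integral_le_nn[of lborel "\<lambda>x. A x (x - w) * f x"]
  by (simp add: norm_mult ennreal_mult)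

lemma Nf_finite: "(\<integral>\<^sup>+x. ennreal (norm (f x)) \<partial>lborel) < \<infinity>"
  using fi by (rule nn_integral_norm_finite)

lemma swap_bound:
  assumes [measurable]: "H \<in> borel_measurable borel"
  shows "(\<integral>\<^sup>+w. \<integral>\<^sup>+x. ennreal (norm (A x (x - w))) * ennreal (norm (f x)) * H w \<partial>lborel \<partial>lborel)
       = (\<integral>\<^sup>+x. ennreal (norm (f x)) * (\<integral>\<^sup>+y. ennreal (norm (A x y)) * H (x - y) \<partial>lborel) \<partial>lborel)"
proof -
  have "(\<integral>\<^sup>+w. \<integral>\<^sup>+x. ennreal (norm (A x (x - w))) * ennreal (norm (f x)) * H w \<partial>lborel \<partial>lborel)
      = (\<integral>\<^sup>+x. \<integral>\<^sup>+w. ennreal (norm (A x (x - w))) * ennreal (norm (f x)) * H w \<partial>lborel \<partial>lborel)"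
    by (rule lborel_pair.Fubini') measurable
  also have "\<dots> = (\<integral>\<^sup>+x. ennreal (norm (f x)) * (\<integral>\<^sup>+w. ennreal (norm (A x (x - w))) * H (x - (x - w)) \<partial>lborel) \<partial>lborel)"
    by (intro nn_integral_cong) (subst nn_integral_cmult[symmetric], measurable, simp add: mult_ac)
  also have "\<dots> = (\<integral>\<^sup>+x. ennreal (norm (f x)) * (\<integral>\<^sup>+y. ennreal (norm (A x y)) * H (x - y) \<partial>lborel) \<partial>lborel)"
    by (intro nn_integral_cong arg_cong2[where f="(*)"] refl nn_integral_reflect[where F="\<lambda>y. ennreal (norm (A _ y)) * H (_ - y)"]) measurable
  finally show ?thesis .
qed

lemma NA_finite: "(\<integral>\<^sup>+w. \<integral>\<^sup>+x. ennreal (norm (A x (x - w))) * ennreal (norm (f x)) \<partial>lborel \<partial>lborel) < \<infinity>"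
proof -
  have "(\<integral>\<^sup>+w. \<integral>\<^sup>+x. ennreal (norm (A x (x - w))) * ennreal (norm (f x)) \<partial>lborel \<partial>lborel)
      = (\<integral>\<^sup>+x. ennreal (norm (f x)) * (\<integral>\<^sup>+y. ennreal (norm (A x y)) * 1 \<partial>lborel) \<partial>lborel)"
    using swap_bound[of "\<lambda>_. 1"] by simp
  also have "\<dots> \<le> (\<integral>\<^sup>+x. ennreal (norm (f x)) * ennreal M \<partial>lborel)"
    using AM by (intro nn_integral_mono_AE) (auto elim!: eventually_mono intro!: mult_left_mono)
  also have "\<dots> = (\<integral>\<^sup>+x. ennreal (norm (f x)) \<partial>lborel) * ennreal M"
    by (rule nn_integral_multc) measurable
  also have "\<dots> < \<infinity>" using Nf_finite by (simp add: ennreal_mult_less_top)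
  finally show ?thesis .
qed

lemma G_integrable: "integrable lborel G"
proof (rule integrableI_bounded)
  have "(\<integral>\<^sup>+w. ennreal (norm (G w)) \<partial>lborel) \<le> (\<integral>\<^sup>+w. \<integral>\<^sup>+x. ennreal (norm (A x (x - w))) * ennreal (norm (f x)) \<partial>lborel \<partial>lborel)"
    by (intro nn_integral_mono G_norm)
  also have "\<dots> < \<infinity>" by (rule NA_finite)
  finally show "(\<integral>\<^sup>+w. ennreal (norm (G w)) \<partial>lborel) < \<infinity>" .
qed simp

lemma G_L2:
  "(\<integral>\<^sup>+w. ennreal ((norm (G w))\<^sup>2) \<partial>lborel) \<le> ennreal ((160 ^ DIM('a)) ^ k) * (\<integral>\<^sup>+x. ennreal ((norm (f x))\<^sup>2) \<partial>lborel)"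
proof -
  define Kr :: real where "Kr = (160 ^ DIM('a)) ^ k"
  have Kr: "0 < Kr" unfolding Kr_def by simp
  have KrE: "ennreal Kr = (160 ^ DIM('a)) ^ k" unfolding Kr_def by (simp add: ennreal_power[symmetric])
  define F where "F = (\<integral>\<^sup>+x. ennreal ((norm (f x))\<^sup>2) \<partial>lborel)"
  define H where "H n w = min (ennreal (norm (G w))) (of_nat n)" for n w
  have Hm[measurable]: "H n \<in> borel_measurable borel" for n unfolding H_def by measurable
  have Hn: "(\<integral>\<^sup>+w. (H n w)\<^sup>2 \<partial>lborel) \<le> ennreal Kr * F" for n
  proof -
    let ?Q = "(MS ^^ k) (H n)"
    define X where "X = (\<integral>\<^sup>+w. (H n w)\<^sup>2 \<partial>lborel)"
    have Xfin: "X < \<infinity>"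
    proof -
      have "X \<le> (\<integral>\<^sup>+w. of_nat n * ennreal (norm (G w)) \<partial>lborel)"
        unfolding X_def H_def power2_eq_square
        by (intro nn_integral_mono) (simp add: mult_mono min.coboundedI1 min.coboundedI2)
      also have "\<dots> = of_nat n * (\<integral>\<^sup>+w. ennreal (norm (G w)) \<partial>lborel)"
        by (rule nn_integral_cmult) measurable
      also have "\<dots> < \<infinity>" using G_integrable by (simp add: integrable_iff_bounded ennreal_mult_less_top of_nat_less_top)
      finally show ?thesis .
    qed
    have "X \<le> (\<integral>\<^sup>+w. H n w * ennreal (norm (G w)) \<partial>lborel)"
      unfolding X_def H_def power2_eq_square by (intro nn_integral_mono mult_left_mono) auto
    also have "\<dots> \<le> (\<integral>\<^sup>+w. \<integral>\<^sup>+x. ennreal (norm (A x (x - w))) * ennreal (norm (f x)) * H n w \<partial>lborel \<partial>lborel)"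
    proof (rule nn_integral_mono)
      fix w
      have "H n w * ennreal (norm (G w)) \<le> H n w * (\<integral>\<^sup>+x. ennreal (norm (A x (x - w))) * ennreal (norm (f x)) \<partial>lborel)"
        by (intro mult_left_mono G_norm) auto
      also have "\<dots> = (\<integral>\<^sup>+x. ennreal (norm (A x (x - w))) * ennreal (norm (f x)) * H n w \<partial>lborel)"
        by (subst nn_integral_cmult[symmetric]) (measurable, simp add: mult_ac)
      finally show "H n w * ennreal (norm (G w)) \<le> \<dots>" .
    qed
    also have "\<dots> = (\<integral>\<^sup>+x. ennreal (norm (f x)) * (\<integral>\<^sup>+y. ennreal (norm (A x y)) * H n (x - y) \<partial>lborel) \<partial>lborel)"
      by (rule swap_bound) measurable
    also have "\<dots> \<le> (\<integral>\<^sup>+x. ennreal (norm (f x)) * ?Q x \<partial>lborel)"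
      using Dom by (intro nn_integral_mono_AE) (auto elim!: eventually_mono intro!: mult_left_mono)
    also have "\<dots> \<le> (\<integral>\<^sup>+x. ennreal (Kr/2) * ennreal ((norm (f x))\<^sup>2) + ennreal (1/(2*Kr)) * (?Q x)\<^sup>2 \<partial>lborel)"
      by (intro nn_integral_mono amgm_enn Kr) auto
    also have "\<dots> = ennreal (Kr/2) * F + ennreal (1/(2*Kr)) * (\<integral>\<^sup>+x. (?Q x)\<^sup>2 \<partial>lborel)"
      unfolding F_def by (subst nn_integral_add) (auto simp: nn_integral_cmult)
    also have "\<dots> \<le> ennreal (Kr/2) * F + ennreal (1/(2*Kr)) * (ennreal Kr * X)"
      unfolding X_def KrE by (intro add_left_mono mult_left_mono MSpow_L2) auto
    also have "ennreal (1/(2*Kr)) * (ennreal Kr * X) = ennreal (1/2) * X"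
      using Kr by (simp add: mult.assoc[symmetric] ennreal_mult[symmetric])
    finally have "X \<le> ennreal (Kr/2) * F + ennreal (1/2) * X" .
    then have "X \<le> 2 * (ennreal (Kr/2) * F)" by (rule half_absorb[OF Xfin])
    also have "2 * (ennreal (Kr/2) * F) = ennreal Kr * F"
    proof -
      have "ennreal Kr = ennreal (2 * (Kr/2))" by simp
      also have "\<dots> = ennreal 2 * ennreal (Kr/2)" by (rule ennreal_mult) (use Kr in auto)
      finally have t: "2 * ennreal (Kr/2) = ennreal Kr" by simp
      show ?thesis by (simp add: mult.assoc[symmetric] t)
    qed
    finally show ?thesis unfolding X_def .
  qed
  have "(\<integral>\<^sup>+w. ennreal ((norm (G w))\<^sup>2) \<partial>lborel) = (\<integral>\<^sup>+w. (SUP n. (H n w)\<^sup>2) \<partial>lborel)"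
  proof (rule nn_integral_cong)
    fix w
    show "ennreal ((norm (G w))\<^sup>2) = (SUP n. (H n w)\<^sup>2)"
    proof (rule antisym)
      obtain n :: nat where n: "norm (G w) \<le> real n" using real_arch_simple by blast
      have "H n w = ennreal (norm (G w))" unfolding H_def using n by (simp add: min_def ennreal_leI)
      then have "ennreal ((norm (G w))\<^sup>2) = (H n w)\<^sup>2" by (simp add: ennreal_power)
      then show "ennreal ((norm (G w))\<^sup>2) \<le> (SUP n. (H n w)\<^sup>2)" by (metis SUP_upper UNIV_I)
      show "(SUP n. (H n w)\<^sup>2) \<le> ennreal ((norm (G w))\<^sup>2)"
        by (intro SUP_least) (auto simp: H_def ennreal_power[symmetric] intro!: power_mono)
    qed
  qed
  also have "\<dots> = (SUP n. \<integral>\<^sup>+w. (H n w)\<^sup>2 \<partial>lborel)"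
  proof (rule nn_integral_monotone_convergence_SUP)
    show "incseq (\<lambda>n w. (H n w)\<^sup>2)"
      by (auto simp: incseq_def le_fun_def H_def intro!: power_mono min.mono)
  qed measurable
  also have "\<dots> \<le> ennreal Kr * (\<integral>\<^sup>+x. ennreal ((norm (f x))\<^sup>2) \<partial>lborel)"
    using Hn unfolding F_def by (intro SUP_least) auto
  finally show ?thesis unfolding Kr_def .
qed


lemma T_identity:
  "(\<integral>x. (\<integral>y. A x y * cis (- 2 * pi * (y \<bullet> \<xi>)) \<partial>lborel) * cis (2 * pi * (x \<bullet> \<xi>)) * f x \<partial>lborel) = ift G \<xi>"
proof -
  have int2: "integrable (lborel \<Otimes>\<^sub>M lborel) (\<lambda>(x, w). A x (x - w) * f x * cis (2 * pi * (w \<bullet> \<xi>)))"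
  proof (rule integrable_pair_bound)
    have "(\<integral>\<^sup>+x. \<integral>\<^sup>+w. ennreal (norm (A x (x - w) * f x * cis (2 * pi * (w \<bullet> \<xi>)))) \<partial>lborel \<partial>lborel)
        = (\<integral>\<^sup>+x. \<integral>\<^sup>+w. ennreal (norm (A x (x - w))) * ennreal (norm (f x)) \<partial>lborel \<partial>lborel)"
      by (intro nn_integral_cong) (simp add: norm_mult ennreal_mult)
    also have "\<dots> = (\<integral>\<^sup>+w. \<integral>\<^sup>+x. ennreal (norm (A x (x - w))) * ennreal (norm (f x)) \<partial>lborel \<partial>lborel)"
      by (rule lborel_pair.Fubini'[symmetric]) measurable
    also have "\<dots> < \<infinity>" by (rule NA_finite)
    finally show "(\<integral>\<^sup>+x. \<integral>\<^sup>+w. ennreal (norm (case (x, w) of (x, w) \<Rightarrow> A x (x - w) * f x * cis (2 * pi * (w \<bullet> \<xi>)))) \<partial>lborel \<partial>lborel) < \<infinity>"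
      by simp
  qed measurable
  have "(\<integral>x. (\<integral>y. A x y * cis (- 2 * pi * (y \<bullet> \<xi>)) \<partial>lborel) * cis (2 * pi * (x \<bullet> \<xi>)) * f x \<partial>lborel)
      = (\<integral>x. \<integral>y. A x y * f x * cis (2 * pi * ((x - y) \<bullet> \<xi>)) \<partial>lborel \<partial>lborel)"
  proof (intro Bochner_Integration.integral_cong refl)
    fix x
    have "(\<integral>y. A x y * cis (- 2 * pi * (y \<bullet> \<xi>)) \<partial>lborel) * cis (2 * pi * (x \<bullet> \<xi>)) * f x
        = (\<integral>y. A x y * cis (- 2 * pi * (y \<bullet> \<xi>)) * cis (2 * pi * (x \<bullet> \<xi>)) * f x \<partial>lborel)"
      by simp
    also have "\<dots> = (\<integral>y. A x y * f x * cis (2 * pi * ((x - y) \<bullet> \<xi>)) \<partial>lborel)"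
    proof (intro Bochner_Integration.integral_cong refl)
      fix y
      have "cis (- 2 * pi * (y \<bullet> \<xi>)) * cis (2 * pi * (x \<bullet> \<xi>)) = cis (2 * pi * ((x - y) \<bullet> \<xi>))"
        by (simp add: cis_mult inner_diff_left algebra_simps)
      then show "A x y * cis (- 2 * pi * (y \<bullet> \<xi>)) * cis (2 * pi * (x \<bullet> \<xi>)) * f x = A x y * f x * cis (2 * pi * ((x - y) \<bullet> \<xi>))"
        by (simp add: mult_ac)
    qed
    finally show "(\<integral>y. A x y * cis (- 2 * pi * (y \<bullet> \<xi>)) \<partial>lborel) * cis (2 * pi * (x \<bullet> \<xi>)) * f x
        = (\<integral>y. A x y * f x * cis (2 * pi * ((x - y) \<bullet> \<xi>)) \<partial>lborel)" .
  qed
  also have "\<dots> = (\<integral>x. \<integral>w. A x (x - w) * f x * cis (2 * pi * (w \<bullet> \<xi>)) \<partial>lborel \<partial>lborel)"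
  proof (rule Bochner_Integration.integral_cong[OF refl])
    fix x
    have mF: "(\<lambda>y. A x y * f x * cis (2 * pi * ((x - y) \<bullet> \<xi>))) \<in> borel_measurable borel"
      by measurable
    have "(\<integral>y. A x y * f x * cis (2 * pi * ((x - y) \<bullet> \<xi>)) \<partial>lborel)
        = (\<integral>w. A x (x - w) * f x * cis (2 * pi * ((x - (x - w)) \<bullet> \<xi>)) \<partial>lborel)"
      using integral_reflect[OF mF, of x] by simp
    then show "(\<integral>y. A x y * f x * cis (2 * pi * ((x - y) \<bullet> \<xi>)) \<partial>lborel)
        = (\<integral>w. A x (x - w) * f x * cis (2 * pi * (w \<bullet> \<xi>)) \<partial>lborel)" by simp
  qed
  also have "\<dots> = (\<integral>w. \<integral>x. A x (x - w) * f x * cis (2 * pi * (w \<bullet> \<xi>)) \<partial>lborel \<partial>lborel)"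
    by (rule lborel_pair.Fubini_integral[symmetric]) (rule int2)
  also have "\<dots> = ift G \<xi>"
    unfolding ift_def G_def by simp
  finally show ?thesis .
qed

end

theorem lemma2p1:
  fixes k :: nat
  assumes "k \<ge> 1"
  shows "\<exists>C::real. \<forall>(a :: 'a::euclidean_space \<Rightarrow> 'a \<Rightarrow> complex).
     ((\<forall>x. \<exists>bs. length bs = k \<and> (\<forall>b\<in>set bs. bump b) \<and> a x = conv_prod bs) \<and>
      (\<lambda>(x, y). a x y) \<in> borel_measurable lebesgue \<and>
      (\<exists>M::real. AE x in lebesgue. (\<integral>\<^sup>+ y. ennreal (norm (a x y)) \<partial>lebesgue) \<le> ennreal M))
     \<longrightarrow> (\<forall>f :: 'a \<Rightarrow> complex. f \<in> borel_measurable lebesgue \<and> integrable lebesgue f \<and>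
            integrable lebesgue (\<lambda>x. (norm (f x))\<^sup>2 :: real) \<longrightarrow>
            opT a f \<in> borel_measurable lebesgue \<and>
            (\<integral>\<^sup>+ \<xi>. ennreal ((norm (opT a f \<xi>))\<^sup>2) \<partial>lebesgue)
              \<le> ennreal (C\<^sup>2) * (\<integral>\<^sup>+ x. ennreal ((norm (f x))\<^sup>2) \<partial>lebesgue))"
proof -
  define Kr :: real where "Kr = (160 ^ DIM('a)) ^ k"
  define C where "C = sqrt Kr"
  have C2: "C\<^sup>2 = Kr" unfolding C_def Kr_def by simp
  show ?thesis
  proof (intro exI[of _ C] allI impI)
    fix a :: "'a \<Rightarrow> 'a \<Rightarrow> complex"
    assume hyp: "(\<forall>x. \<exists>bs. length bs = k \<and> (\<forall>b\<in>set bs. bump b) \<and> a x = conv_prod bs) \<and>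
      (\<lambda>(x, y). a x y) \<in> borel_measurable lebesgue \<and>
      (\<exists>M::real. AE x in lebesgue. (\<integral>\<^sup>+ y. ennreal (norm (a x y)) \<partial>lebesgue) \<le> ennreal M)"
    then obtain M :: real where bumps: "\<forall>x. \<exists>bs. length bs = k \<and> (\<forall>b\<in>set bs. bump b) \<and> a x = conv_prod bs"
      and am: "(\<lambda>(x, y). a x y) \<in> borel_measurable lebesgue"
      and aM: "AE x in lebesgue. (\<integral>\<^sup>+ y. ennreal (norm (a x y)) \<partial>lebesgue) \<le> ennreal M"
      by blast
    fix f :: "'a \<Rightarrow> complex"
    assume hf: "f \<in> borel_measurable lebesgue \<and> integrable lebesgue f \<and> integrable lebesgue (\<lambda>x. (norm (f x))\<^sup>2 :: real)"
    then have fm: "f \<in> borel_measurable lebesgue" and fi: "integrable lebesgue f" by auto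
    obtain a' where a'm: "a' \<in> borel_measurable (lborel :: ('a \<times> 'a) measure)"
      and a'ae: "AE p in lborel. (\<lambda>(x, y). a x y) p = a' p"
      using ex_borel_complex[OF am] by blast
    obtain f' where f'm[measurable]: "f' \<in> borel_measurable (lborel :: 'a measure)"
      and f'ae: "AE x in lborel. f x = f' x"
      using ex_borel_complex[OF fm] by blast
    have f'mb[measurable]: "f' \<in> borel_measurable borel" using f'm by simp
    define A where "A x y = a' (x, y)" for x y
    have Am: "(\<lambda>(x, y). A x y) \<in> borel_measurable (borel \<Otimes>\<^sub>M borel)"
      using a'm unfolding A_def by (simp add: borel_prod)
    have aeA: "AE x in lborel. AE y in lborel. a x y = A x y"
    proof -
      have "AE p in (lborel \<Otimes>\<^sub>M lborel). a (fst p) (snd p) = A (fst p) (snd p)"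
        using a'ae unfolding lborel_prod A_def by (auto simp: case_prod_beta)
      from lborel_pair.AE_pair[OF this] show ?thesis by simp
    qed
    have fi': "integrable lborel f'"
    proof -
      have "integrable (completion lborel) f'"
        using fi by (rule integrable_cong_AE_imp) (use f'ae in \<open>auto intro: measurable_completion AE_completion\<close>)
      then show ?thesis by (simp add: integrable_completion)
    qed
    have AM: "AE x in lborel. (\<integral>\<^sup>+y. ennreal (norm (A x y)) \<partial>lborel) \<le> ennreal M"
    proof -
      have "AE x in lborel. (\<integral>\<^sup>+ y. ennreal (norm (a x y)) \<partial>lebesgue) \<le> ennreal M"
        using aM by (simp add: AE_completion_iff)
      then show ?thesis using aeA
      proof eventually_elim
        case (elim x)
        have "(\<integral>\<^sup>+y. ennreal (norm (A x y)) \<partial>lborel) = (\<integral>\<^sup>+y. ennreal (norm (a x y)) \<partial>lborel)"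
          by (rule nn_integral_cong_AE) (use elim(2) in \<open>auto elim!: eventually_mono\<close>)
        also have "\<dots> = (\<integral>\<^sup>+ y. ennreal (norm (a x y)) \<partial>lebesgue)" by (simp add: nn_integral_completion)
        finally show ?case using elim(1) by simp
      qed
    qed
    have Dom: "AE x in lborel. \<forall>H. H \<in> borel_measurable borel \<longrightarrow>
                (\<integral>\<^sup>+y. ennreal (norm (A x y)) * H (x - y) \<partial>lborel) \<le> (MS ^^ k) H x"
      using aeA
    proof eventually_elim
      case (elim x)
      obtain bs where bs: "length bs = k" "\<forall>b\<in>set bs. bump b" "a x = conv_prod bs" using bumps by blast
      obtain vs where vs: "length vs = length bs" "\<forall>v\<in>set vs. \<forall>i\<in>Basis. 0 < v \<bullet> i"
        "\<forall>y. ennreal (norm (conv_prod bs y)) \<le> Dv vs y"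
        using conv_prod_Dv[OF bs(2)] by blast
      show ?case
      proof (intro allI impI)
        fix H :: "'a \<Rightarrow> ennreal" assume [measurable]: "H \<in> borel_measurable borel"
        have "(\<integral>\<^sup>+y. ennreal (norm (A x y)) * H (x - y) \<partial>lborel) = (\<integral>\<^sup>+y. ennreal (norm (a x y)) * H (x - y) \<partial>lborel)"
          by (rule nn_integral_cong_AE) (use elim in \<open>auto elim!: eventually_mono\<close>)
        also have "\<dots> \<le> (\<integral>\<^sup>+y. Dv vs y * H (x - y) \<partial>lborel)"
          using vs(3) bs(3) by (intro nn_integral_mono mult_right_mono) auto
        also have "\<dots> \<le> (MS ^^ length vs) H x"
          by (rule Dv_bound) (use vs bs assms in auto)
        finally show "(\<integral>\<^sup>+y. ennreal (norm (A x y)) * H (x - y) \<partial>lborel) \<le> (MS ^^ k) H x"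
          using vs bs by simp
      qed
    qed
    interpret c: core_setup A f' M k
      by unfold_locales (use Am f'mb fi' AM Dom in auto)
    have T: "opT a f \<xi> = ift c.G \<xi>" for \<xi>
    proof -
      have "opT a f \<xi> = (\<integral>x. (\<integral>y. A x y * cis (- 2 * pi * (y \<bullet> \<xi>)) \<partial>lborel) * cis (2 * pi * (x \<bullet> \<xi>)) * f' x \<partial>lborel)"
        unfolding opT_def
      proof (rule integral_completion_AE)
        show "(\<lambda>x. (\<integral>y. A x y * cis (- 2 * pi * (y \<bullet> \<xi>)) \<partial>lborel) * cis (2 * pi * (x \<bullet> \<xi>)) * f' x) \<in> borel_measurable lborel"
          using c.Am by measurable
        show "AE x in lborel. fourier (a x) \<xi> * cis (2 * pi * (x \<bullet> \<xi>)) * f x =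
            (\<integral>y. A x y * cis (- 2 * pi * (y \<bullet> \<xi>)) \<partial>lborel) * cis (2 * pi * (x \<bullet> \<xi>)) * f' x"
          using aeA f'ae
        proof eventually_elim
          case (elim x)
          have "fourier (a x) \<xi> = (\<integral>y. A x y * cis (- 2 * pi * (y \<bullet> \<xi>)) \<partial>lborel)"
            unfolding fourier_def
            by (rule integral_completion_AE) (use elim(1) c.A_slice in \<open>auto elim!: eventually_mono\<close>)
          then show ?case using elim(2) by simp
        qed
      qed
      also have "\<dots> = ift c.G \<xi>" by (rule c.T_identity)
      finally show ?thesis .
    qed
    have Teq: "opT a f = ift c.G" using T by auto
    show "opT a f \<in> borel_measurable lebesgue \<and>
        (\<integral>\<^sup>+ \<xi>. ennreal ((norm (opT a f \<xi>))\<^sup>2) \<partial>lebesgue) \<le> ennreal (C\<^sup>2) * (\<integral>\<^sup>+ x. ennreal ((norm (f x))\<^sup>2) \<partial>lebesgue)"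
    proof
      show "opT a f \<in> borel_measurable lebesgue"
        unfolding Teq by (rule measurable_completion) (use c.G_measurable in simp)
      have "(\<integral>\<^sup>+ \<xi>. ennreal ((norm (opT a f \<xi>))\<^sup>2) \<partial>lebesgue) = (\<integral>\<^sup>+ \<xi>. ennreal ((norm (ift c.G \<xi>))\<^sup>2) \<partial>lborel)"
        unfolding Teq by (simp add: nn_integral_completion)
      also have "\<dots> \<le> (\<integral>\<^sup>+w. ennreal ((norm (c.G w))\<^sup>2) \<partial>lborel)"
        by (rule bessel) (use c.G_measurable c.G_integrable in auto)
      also have "\<dots> \<le> ennreal ((160 ^ DIM('a)) ^ k) * (\<integral>\<^sup>+x. ennreal ((norm (f' x))\<^sup>2) \<partial>lborel)"
        by (rule c.G_L2)
      also have "(\<integral>\<^sup>+x. ennreal ((norm (f' x))\<^sup>2) \<partial>lborel) = (\<integral>\<^sup>+ x. ennreal ((norm (f x))\<^sup>2) \<partial>lebesgue)"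
        using f'ae by (simp add: nn_integral_completion) (rule nn_integral_cong_AE, auto elim!: eventually_mono)
      finally show "(\<integral>\<^sup>+ \<xi>. ennreal ((norm (opT a f \<xi>))\<^sup>2) \<partial>lebesgue) \<le> ennreal (C\<^sup>2) * (\<integral>\<^sup>+ x. ennreal ((norm (f x))\<^sup>2) \<partial>lebesgue)"
        unfolding C2 Kr_def .
    qed
  qed
qed

end
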